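(* For every $n\ge1$, the set of two-sided ideals of the algebra $\mathbb{S}_n$ satisfies the ascending chain condition: every ascending chain $I_1\subseteq I_2\subseteq\cdots$ of two-sided ideals of $\mathbb{S}_n$ stabilizes.
   Context: $K$ is a field. $\mathbb{S}_n$ is the $K$-algebra generated by $x_1,\dots,x_n,y_1,\dots,y_n$ subject to the defining relations $y_ix_i=1$ for all $i$, and $[x_i,y_j]=[x_i,x_j]=[y_i,y_j]=0$ for all $i\ne j$, where $[a,b]=ab-ba$. (This algebra is neither left nor right Noetherian.) *)

theory Defs
  imports "HOL-Algebra.QuotRing"
begin

datatype gen = X nat | Y nat

definition gens :: "nat \<Rightarrow> gen set" where
  "gens n = {X i | i. 1 \<le> i \<and> i \<le> n} \<union> {Y i | i. 1 \<le> i \<and> i \<le> n}"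

text \<open>The free associative K-algebra on x_1..x_n, y_1..y_n: finitely supported
  K-valued functions on words (lists) over the generators, with pointwise addition
  and the concatenation (convolution) product.\<close>
definition free_alg :: "nat \<Rightarrow> (gen list \<Rightarrow> 'k::field) ring" where
  "free_alg n = \<lparr> carrier = {f. finite {w. f w \<noteq> 0} \<and> (\<forall>w. f w \<noteq> 0 \<longrightarrow> set w \<subseteq> gens n)},
     monoid.mult = (\<lambda>f g w. \<Sum>i\<le>length w. f (take i w) * g (drop i w)),
     one = (\<lambda>w. if w = [] then 1 else 0),
     zero = (\<lambda>w. 0),
     add = (\<lambda>f g w. f w + g w) \<rparr>"

definition mon :: "gen list \<Rightarrow> gen list \<Rightarrow> 'k::field" where
  "mon u = (\<lambda>w. if w = u then 1 else 0)"

definition rels :: "nat \<Rightarrow> (gen list \<Rightarrow> 'k::field) set" where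
  "rels n =
     {(\<lambda>w. mon [Y i, X i] w - mon [] w) | i. 1 \<le> i \<and> i \<le> n}
   \<union> {(\<lambda>w. mon [X i, Y j] w - mon [Y j, X i] w) | i j. 1 \<le> i \<and> i \<le> n \<and> 1 \<le> j \<and> j \<le> n \<and> i \<noteq> j}
   \<union> {(\<lambda>w. mon [X i, X j] w - mon [X j, X i] w) | i j. 1 \<le> i \<and> i \<le> n \<and> 1 \<le> j \<and> j \<le> n \<and> i \<noteq> j}
   \<union> {(\<lambda>w. mon [Y i, Y j] w - mon [Y j, Y i] w) | i j. 1 \<le> i \<and> i \<le> n \<and> 1 \<le> j \<and> j \<le> n \<and> i \<noteq> j}"

definition S_alg :: "nat \<Rightarrow> (gen list \<Rightarrow> 'k::field) set ring" where
  "S_alg n = free_alg n Quot genideal (free_alg n) (rels n)"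

end

theory Submission
  imports Defs
begin

definition subr :: "('a,'b) ring_scheme \<Rightarrow> 'a set \<Rightarrow> bool" where
  "subr R S \<longleftrightarrow> S \<subseteq> carrier R \<and> \<one>\<^bsub>R\<^esub> \<in> S \<and>
     (\<forall>a\<in>S. \<forall>b\<in>S. a \<oplus>\<^bsub>R\<^esub> b \<in> S \<and> a \<otimes>\<^bsub>R\<^esub> b \<in> S) \<and> (\<forall>a\<in>S. \<ominus>\<^bsub>R\<^esub> a \<in> S)"

definition bideal :: "('a,'b) ring_scheme \<Rightarrow> 'a set \<Rightarrow> 'a set \<Rightarrow> bool" where
  "bideal R B I \<longleftrightarrow> I \<subseteq> B \<and> \<zero>\<^bsub>R\<^esub> \<in> I \<and> (\<forall>a\<in>I. \<forall>b\<in>I. a \<oplus>\<^bsub>R\<^esub> b \<in> I) \<and> (\<forall>a\<in>I. \<ominus>\<^bsub>R\<^esub> a \<in> I)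
     \<and> (\<forall>a\<in>I. \<forall>b\<in>B. a \<otimes>\<^bsub>R\<^esub> b \<in> I \<and> b \<otimes>\<^bsub>R\<^esub> a \<in> I)"

definition accz :: "('a,'b) ring_scheme \<Rightarrow> 'a set \<Rightarrow> 'a set \<Rightarrow> bool" where
  "accz R B Z \<longleftrightarrow> (\<forall>I::nat \<Rightarrow> 'a set. (\<forall>m. bideal R B (I m) \<and> Z \<subseteq> I m \<and> I m \<subseteq> I (Suc m))
      \<longrightarrow> (\<exists>N. \<forall>m\<ge>N. I m = I N))"

inductive_set gcl :: "('a,'b) ring_scheme \<Rightarrow> 'a set \<Rightarrow> 'a set" for R :: "('a,'b) ring_scheme" and G :: "'a set" where
  gcl_gen: "a \<in> G \<Longrightarrow> a \<in> gcl R G"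
| gcl_one: "\<one>\<^bsub>R\<^esub> \<in> gcl R G"
| gcl_add: "a \<in> gcl R G \<Longrightarrow> b \<in> gcl R G \<Longrightarrow> a \<oplus>\<^bsub>R\<^esub> b \<in> gcl R G"
| gcl_mul: "a \<in> gcl R G \<Longrightarrow> b \<in> gcl R G \<Longrightarrow> a \<otimes>\<^bsub>R\<^esub> b \<in> gcl R G"
| gcl_neg: "a \<in> gcl R G \<Longrightarrow> \<ominus>\<^bsub>R\<^esub> a \<in> gcl R G"

inductive_set asum :: "('a,'b) ring_scheme \<Rightarrow> 'a set \<Rightarrow> 'a set" for R :: "('a,'b) ring_scheme" and G :: "'a set" where
  asum_gen: "a \<in> G \<Longrightarrow> a \<in> asum R G"
| asum_zero: "\<zero>\<^bsub>R\<^esub> \<in> asum R G"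
| asum_add: "a \<in> asum R G \<Longrightarrow> b \<in> asum R G \<Longrightarrow> a \<oplus>\<^bsub>R\<^esub> b \<in> asum R G"
| asum_neg: "a \<in> asum R G \<Longrightarrow> \<ominus>\<^bsub>R\<^esub> a \<in> asum R G"

lemma chain_mono:
  assumes "\<And>m. (Q::nat \<Rightarrow> 'a set) m \<subseteq> Q (Suc m)" "m \<le> m'"
  shows "Q m \<subseteq> Q m'"
  using assms(2) by (induction rule: dec_induct) (use assms(1) in blast)+

lemma accD: "accz R B Z \<Longrightarrow> (\<And>m. bideal R B (I m)) \<Longrightarrow> (\<And>m. Z \<subseteq> I m) \<Longrightarrow> (\<And>m. I m \<subseteq> I (Suc m))
   \<Longrightarrow> \<exists>N. \<forall>m\<ge>N. I m = I N"
  unfolding accz_def by blast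

lemma accI: "(\<And>I. (\<And>m. bideal R B (I m)) \<Longrightarrow> (\<And>m. Z \<subseteq> I m) \<Longrightarrow> (\<And>m. I m \<subseteq> I (Suc m))
   \<Longrightarrow> \<exists>N. \<forall>m\<ge>N. I m = I N) \<Longrightarrow> accz R B Z"
  unfolding accz_def by blast

context ring
begin

lemma gcl_carrier: "G \<subseteq> carrier R \<Longrightarrow> gcl R G \<subseteq> carrier R"
proof
  fix a assume G: "G \<subseteq> carrier R" and a: "a \<in> gcl R G"
  from a show "a \<in> carrier R"
    by (induction rule: gcl.induct) (use G in auto)
qed

lemma subr_gcl: "G \<subseteq> carrier R \<Longrightarrow> subr R (gcl R G)"
  unfolding subr_def using gcl_carrier by (auto intro: gcl.intros)

lemma gcl_least: "subr R S \<Longrightarrow> G \<subseteq> S \<Longrightarrow> gcl R G \<subseteq> S"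
proof
  fix a assume S: "subr R S" and G: "G \<subseteq> S" and a: "a \<in> gcl R G"
  from a show "a \<in> S"
    by (induction rule: gcl.induct) (use S G in \<open>auto simp: subr_def\<close>)
qed

lemma gcl_sub: "G \<subseteq> gcl R G" by (auto intro: gcl.intros)

lemma gcl_mono: "G \<subseteq> H \<Longrightarrow> H \<subseteq> carrier R \<Longrightarrow> gcl R G \<subseteq> gcl R H"
  by (meson gcl_least gcl_sub subr_gcl subset_trans)

lemma gcl_idem: "G \<subseteq> carrier R \<Longrightarrow> H \<subseteq> carrier R \<Longrightarrow> gcl R (gcl R G \<union> H) = gcl R (G \<union> H)"
proof
  assume G: "G \<subseteq> carrier R" and H: "H \<subseteq> carrier R"
  have s: "subr R (gcl R (G \<union> H))" using G H by (intro subr_gcl) auto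
  have "gcl R G \<subseteq> gcl R (G \<union> H)" using G H by (intro gcl_mono) auto
  then show "gcl R (gcl R G \<union> H) \<subseteq> gcl R (G \<union> H)"
    using s gcl_least[OF s] gcl_sub[of "G \<union> H"] by blast
  show "gcl R (G \<union> H) \<subseteq> gcl R (gcl R G \<union> H)"
    using G H gcl_carrier gcl_sub[of G] by (intro gcl_mono) auto
qed

lemma subr_carrier: "subr R S \<Longrightarrow> a \<in> S \<Longrightarrow> a \<in> carrier R" by (auto simp: subr_def)
lemma subr_one: "subr R S \<Longrightarrow> \<one> \<in> S" by (auto simp: subr_def)
lemma subr_add: "subr R S \<Longrightarrow> a \<in> S \<Longrightarrow> b \<in> S \<Longrightarrow> a \<oplus> b \<in> S" by (auto simp: subr_def)
lemma subr_mul: "subr R S \<Longrightarrow> a \<in> S \<Longrightarrow> b \<in> S \<Longrightarrow> a \<otimes> b \<in> S" by (auto simp: subr_def)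
lemma subr_neg: "subr R S \<Longrightarrow> a \<in> S \<Longrightarrow> \<ominus> a \<in> S" by (auto simp: subr_def)
lemma subr_zero: "subr R S \<Longrightarrow> \<zero> \<in> S"
proof -
  assume s: "subr R S"
  then have "\<one> \<oplus> \<ominus> \<one> \<in> S" by (auto simp: subr_def)
  then show ?thesis using r_neg by simp
qed
lemma subr_minus: "subr R S \<Longrightarrow> a \<in> S \<Longrightarrow> b \<in> S \<Longrightarrow> a \<ominus> b \<in> S"
  by (simp add: minus_eq subr_add subr_neg)
lemma subr_pow: "subr R S \<Longrightarrow> a \<in> S \<Longrightarrow> a [^] (n::nat) \<in> S"
  by (induction n) (auto simp: subr_one subr_mul)

lemma bideal_sub: "bideal R B I \<Longrightarrow> I \<subseteq> B" by (auto simp: bideal_def)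
lemma bideal_zero: "bideal R B I \<Longrightarrow> \<zero> \<in> I" by (auto simp: bideal_def)
lemma bideal_add: "bideal R B I \<Longrightarrow> a \<in> I \<Longrightarrow> b \<in> I \<Longrightarrow> a \<oplus> b \<in> I" by (auto simp: bideal_def)
lemma bideal_neg: "bideal R B I \<Longrightarrow> a \<in> I \<Longrightarrow> \<ominus> a \<in> I" by (auto simp: bideal_def)
lemma bideal_lmul: "bideal R B I \<Longrightarrow> a \<in> I \<Longrightarrow> b \<in> B \<Longrightarrow> b \<otimes> a \<in> I" by (auto simp: bideal_def)
lemma bideal_rmul: "bideal R B I \<Longrightarrow> a \<in> I \<Longrightarrow> b \<in> B \<Longrightarrow> a \<otimes> b \<in> I" by (auto simp: bideal_def)
lemma bideal_minus: "bideal R B I \<Longrightarrow> a \<in> I \<Longrightarrow> b \<in> I \<Longrightarrow> a \<ominus> b \<in> I"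
  by (simp add: minus_eq bideal_add bideal_neg)

lemma bideal_inter: "bideal R B I \<Longrightarrow> bideal R B J \<Longrightarrow> bideal R B (I \<inter> J)"
  by (auto simp: bideal_def)

lemma bideal_restrict: "bideal R B I \<Longrightarrow> B' \<subseteq> B \<Longrightarrow> subr R B' \<Longrightarrow> bideal R B' (I \<inter> B')"
  unfolding bideal_def by (auto simp: subr_zero subr_add subr_neg subr_mul)

definition ssum :: "'a set \<Rightarrow> 'a set \<Rightarrow> 'a set" where
  "ssum I J = {a \<oplus> b | a b. a \<in> I \<and> b \<in> J}"

lemma ssumI: "a \<in> I \<Longrightarrow> b \<in> J \<Longrightarrow> a \<oplus> b \<in> ssum I J"
  unfolding ssum_def by blast

lemma ssumE: "u \<in> ssum I J \<Longrightarrow> (\<And>a b. u = a \<oplus> b \<Longrightarrow> a \<in> I \<Longrightarrow> b \<in> J \<Longrightarrow> P) \<Longrightarrow> P"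
  unfolding ssum_def by blast

lemma bideal_ssum:
  assumes B: "subr R B" and I: "bideal R B I" and J: "bideal R B J"
  shows "bideal R B (ssum I J)"
proof -
  have cB: "a \<in> B \<Longrightarrow> a \<in> carrier R" for a using B by (auto simp: subr_def)
  have cI: "a \<in> I \<Longrightarrow> a \<in> carrier R" for a using bideal_sub[OF I] cB by blast
  have cJ: "a \<in> J \<Longrightarrow> a \<in> carrier R" for a using bideal_sub[OF J] cB by blast
  show ?thesis unfolding bideal_def
  proof (intro conjI ballI)
    show "ssum I J \<subseteq> B"
      using bideal_sub[OF I] bideal_sub[OF J] subr_add[OF B] by (auto elim!: ssumE)
    have "\<zero> \<oplus> \<zero> \<in> ssum I J" using I J by (intro ssumI) (auto simp: bideal_def)
    then show "\<zero> \<in> ssum I J" by simp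
  next
    fix u v assume "u \<in> ssum I J" "v \<in> ssum I J"
    then obtain a b c d where u: "u = a \<oplus> b" "a \<in> I" "b \<in> J" and v: "v = c \<oplus> d" "c \<in> I" "d \<in> J"
      by (auto elim!: ssumE)
    have "u \<oplus> v = (a \<oplus> c) \<oplus> (b \<oplus> d)" using u v cI cJ by (simp add: a_ac)
    then show "u \<oplus> v \<in> ssum I J"
      using u v I J by (auto intro!: ssumI simp: bideal_def)
  next
    fix u assume "u \<in> ssum I J"
    then obtain a b where u: "u = a \<oplus> b" "a \<in> I" "b \<in> J" by (auto elim!: ssumE)
    have "\<ominus> u = \<ominus> a \<oplus> \<ominus> b" using u cI cJ by (simp add: minus_add)
    then show "\<ominus> u \<in> ssum I J"
      using u I J by (auto intro!: ssumI simp: bideal_def)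
  next
    fix u c assume "u \<in> ssum I J" "c \<in> B"
    from \<open>u \<in> ssum I J\<close> obtain a b where u: "u = a \<oplus> b" "a \<in> I" "b \<in> J" by (auto elim!: ssumE)
    have "u \<otimes> c = a \<otimes> c \<oplus> b \<otimes> c" "c \<otimes> u = c \<otimes> a \<oplus> c \<otimes> b"
      using u cI cJ cB \<open>c \<in> B\<close> by (simp_all add: l_distr r_distr)
    then show "u \<otimes> c \<in> ssum I J" "c \<otimes> u \<in> ssum I J"
      using u I J \<open>c \<in> B\<close> by (auto intro!: ssumI simp: bideal_def)
  qed
qed

lemma ssum_sub1: "bideal R B J \<Longrightarrow> I \<subseteq> carrier R \<Longrightarrow> I \<subseteq> ssum I J"
  unfolding ssum_def by (force simp: bideal_def)

lemma ssum_sub2: "bideal R B I \<Longrightarrow> J \<subseteq> carrier R \<Longrightarrow> J \<subseteq> ssum I J"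
  unfolding ssum_def by (force simp: bideal_def)

lemma ssum_mono: "I \<subseteq> I' \<Longrightarrow> ssum I J \<subseteq> ssum I' J"
  unfolding ssum_def by blast

lemma modular:
  assumes B: "subr R B" and I: "bideal R B I" and I': "bideal R B I'" and F: "bideal R B F"
    and sub: "I \<subseteq> I'" and e1: "I' \<inter> F \<subseteq> I" and e2: "ssum I' F \<subseteq> ssum I F"
  shows "I' \<subseteq> I"
proof
  fix g assume g: "g \<in> I'"
  have cB: "a \<in> B \<Longrightarrow> a \<in> carrier R" for a using B by (auto simp: subr_def)
  have "I' \<subseteq> carrier R" using I' cB by (auto simp: bideal_def)
  then have "g \<in> ssum I' F" using g ssum_sub1[OF F] by blast
  then have "g \<in> ssum I F" using e2 by blast
  then obtain a f where gf: "g = a \<oplus> f" "a \<in> I" "f \<in> F" by (auto elim!: ssumE)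
  have ca: "a \<in> carrier R" and cf: "f \<in> carrier R" using gf I F cB by (auto simp: bideal_def)
  have "f = g \<ominus> a" using gf ca cf by (simp add: minus_eq a_comm[of a] a_assoc r_neg)
  then have "f \<in> I'" using g gf sub I' bideal_minus by blast
  then have "f \<in> I" using e1 gf by blast
  then show "g \<in> I" using gf I bideal_add by blast
qed

end

context ring begin
lemma minus_self: "a \<in> carrier R \<Longrightarrow> a \<ominus> a = \<zero>"
  by (simp add: minus_eq r_neg)
lemma minus_add_cancel: "a \<in> carrier R \<Longrightarrow> b \<in> carrier R \<Longrightarrow> (a \<ominus> b) \<oplus> b = a"
  by (simp add: minus_eq a_assoc l_neg)
lemma add_minus_cancel: "a \<in> carrier R \<Longrightarrow> b \<in> carrier R \<Longrightarrow> (a \<oplus> b) \<ominus> b = a"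
  by (simp add: minus_eq a_assoc r_neg)
lemma minus_swap: "a \<in> carrier R \<Longrightarrow> b \<in> carrier R \<Longrightarrow> b \<ominus> a = \<ominus> (a \<ominus> b)"
  by (simp add: minus_eq minus_add a_comm)
lemma minus_trans: "a \<in> carrier R \<Longrightarrow> b \<in> carrier R \<Longrightarrow> c \<in> carrier R \<Longrightarrow> a \<ominus> c = (a \<ominus> b) \<oplus> (b \<ominus> c)"
  by (simp add: minus_eq a_assoc r_neg1)
lemma minus_addadd: "a \<in> carrier R \<Longrightarrow> b \<in> carrier R \<Longrightarrow> c \<in> carrier R \<Longrightarrow> d \<in> carrier R \<Longrightarrow>
   (a \<oplus> c) \<ominus> (b \<oplus> d) = (a \<ominus> b) \<oplus> (c \<ominus> d)"
  by (simp add: minus_eq minus_add a_ac)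
lemma minus_negneg: "a \<in> carrier R \<Longrightarrow> b \<in> carrier R \<Longrightarrow> (\<ominus> a) \<ominus> (\<ominus> b) = \<ominus> (a \<ominus> b)"
  by (simp add: minus_eq minus_add a_comm)
lemma minus_lmul: "a \<in> carrier R \<Longrightarrow> b \<in> carrier R \<Longrightarrow> c \<in> carrier R \<Longrightarrow> c \<otimes> a \<ominus> c \<otimes> b = c \<otimes> (a \<ominus> b)"
  by (simp add: minus_eq r_distr r_minus)
lemma minus_rmul: "a \<in> carrier R \<Longrightarrow> b \<in> carrier R \<Longrightarrow> c \<in> carrier R \<Longrightarrow> a \<otimes> c \<ominus> b \<otimes> c = (a \<ominus> b) \<otimes> c"
  by (simp add: minus_eq l_distr l_minus)
lemma minus_zero_r: "a \<in> carrier R \<Longrightarrow> a \<ominus> \<zero> = a"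
  by (simp add: minus_eq)
lemma add_minus_l: "a \<in> carrier R \<Longrightarrow> z \<in> carrier R \<Longrightarrow> (a \<oplus> z) \<ominus> a = z"
  by (simp add: minus_eq a_comm[of a z] a_assoc r_neg)
end

locale bctx = ring +
  fixes B :: "'a set" and Z :: "'a set"
  assumes subrB: "subr R B" and idZ: "bideal R B Z"
begin

definition eqz :: "'a \<Rightarrow> 'a \<Rightarrow> bool" where
  "eqz a b \<longleftrightarrow> a \<in> B \<and> b \<in> B \<and> a \<ominus> b \<in> Z"

lemma cB: "a \<in> B \<Longrightarrow> a \<in> carrier R" using subrB by (auto simp: subr_def)
lemma ZB: "z \<in> Z \<Longrightarrow> z \<in> B" using idZ by (auto simp: bideal_def)
lemma cZ: "z \<in> Z \<Longrightarrow> z \<in> carrier R" using ZB cB by blast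

lemma eqzD: "eqz a b \<Longrightarrow> a \<in> B" "eqz a b \<Longrightarrow> b \<in> B" "eqz a b \<Longrightarrow> a \<ominus> b \<in> Z"
  by (auto simp: eqz_def)

lemma eqz_refl: "a \<in> B \<Longrightarrow> eqz a a"
  using cB bideal_zero[OF idZ] by (simp add: eqz_def minus_self)
lemma eqz_sym: "eqz a b \<Longrightarrow> eqz b a"
  unfolding eqz_def using cB minus_swap bideal_neg[OF idZ] by metis
lemma eqz_trans: "eqz a b \<Longrightarrow> eqz b c \<Longrightarrow> eqz a c"
  unfolding eqz_def using cB minus_trans bideal_add[OF idZ] by metis
lemma eqz_add: "eqz a b \<Longrightarrow> eqz c d \<Longrightarrow> eqz (a \<oplus> c) (b \<oplus> d)"
  unfolding eqz_def using cB minus_addadd bideal_add[OF idZ] subr_add[OF subrB] by metis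
lemma eqz_neg: "eqz a b \<Longrightarrow> eqz (\<ominus> a) (\<ominus> b)"
  unfolding eqz_def using cB minus_negneg bideal_neg[OF idZ] subr_neg[OF subrB] by metis
lemma eqz_minus: "eqz a b \<Longrightarrow> eqz c d \<Longrightarrow> eqz (a \<ominus> c) (b \<ominus> d)"
  unfolding minus_eq using eqz_add eqz_neg by blast
lemma eqz_lmul: "eqz a b \<Longrightarrow> c \<in> B \<Longrightarrow> eqz (c \<otimes> a) (c \<otimes> b)"
  unfolding eqz_def using cB minus_lmul bideal_lmul[OF idZ] subr_mul[OF subrB] by metis
lemma eqz_rmul: "eqz a b \<Longrightarrow> c \<in> B \<Longrightarrow> eqz (a \<otimes> c) (b \<otimes> c)"
  unfolding eqz_def using cB minus_rmul bideal_rmul[OF idZ] subr_mul[OF subrB] by metis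
lemma eqz_mul: "eqz a b \<Longrightarrow> eqz c d \<Longrightarrow> eqz (a \<otimes> c) (b \<otimes> d)"
  by (meson eqzD eqz_lmul eqz_rmul eqz_trans)
lemma eqz_addZ: "a \<in> B \<Longrightarrow> z \<in> Z \<Longrightarrow> eqz (a \<oplus> z) a"
  unfolding eqz_def using cB ZB add_minus_l subr_add[OF subrB] by metis
lemma eqz_eq: "a \<in> B \<Longrightarrow> a = b \<Longrightarrow> eqz a b" using eqz_refl by blast
lemma eqz_zero_iff: "a \<in> B \<Longrightarrow> eqz a \<zero> \<longleftrightarrow> a \<in> Z"
  unfolding eqz_def using cB minus_zero_r subr_zero[OF subrB] by auto
lemma eqz_ideal: "eqz a b \<Longrightarrow> bideal R B I \<Longrightarrow> Z \<subseteq> I \<Longrightarrow> b \<in> I \<Longrightarrow> a \<in> I"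
proof -
  assume e: "eqz a b" and I: "bideal R B I" and ZI: "Z \<subseteq> I" and b: "b \<in> I"
  have "a = (a \<ominus> b) \<oplus> b" using e cB eqzD minus_add_cancel by metis
  moreover have "a \<ominus> b \<in> I" using e ZI eqzD by blast
  ultimately show "a \<in> I" using bideal_add[OF I] b by metis
qed
lemma eqz_ZI: "a \<in> Z \<Longrightarrow> eqz a b \<Longrightarrow> b \<in> Z"
  using eqz_ideal[OF eqz_sym idZ] by blast

end

fun Pset :: "('a,'b) ring_scheme \<Rightarrow> 'a set \<Rightarrow> 'a \<Rightarrow> nat \<Rightarrow> 'a set" where
  "Pset R R0 t 0 = {\<zero>\<^bsub>R\<^esub>}"
| "Pset R R0 t (Suc d) = {p \<oplus>\<^bsub>R\<^esub> r \<otimes>\<^bsub>R\<^esub> (t [^]\<^bsub>R\<^esub> d) | p r. p \<in> Pset R R0 t d \<and> r \<in> R0}"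

locale hctx = bctx +
  fixes R0 :: "'a set" and t :: 'a
  assumes subrR0: "subr R R0" and R0B: "R0 \<subseteq> B" and tB: "t \<in> B"
    and Beq: "B = gcl R (R0 \<union> {t})"
    and comm: "r \<in> R0 \<Longrightarrow> eqz (t \<otimes> r) (r \<otimes> t)"
begin

abbreviation P where "P d \<equiv> Pset R R0 t d"

lemma tc: "t \<in> carrier R" using tB cB by blast
lemma R0c: "r \<in> R0 \<Longrightarrow> r \<in> carrier R" using R0B cB by blast
lemma tpowB: "t [^] (n::nat) \<in> B" using subr_pow[OF subrB tB] .
lemma tpowc: "t [^] (n::nat) \<in> carrier R" using tpowB cB by blast

lemma P_B: "p \<in> P d \<Longrightarrow> p \<in> B"
proof (induction d arbitrary: p)
  case 0 then show ?case using subr_zero[OF subrB] by simp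
next
  case (Suc d)
  then obtain q r where "p = q \<oplus> r \<otimes> t [^] d" "q \<in> P d" "r \<in> R0" by auto
  then show ?case using Suc.IH R0B tpowB subr_add[OF subrB] subr_mul[OF subrB] by blast
qed

lemma P_c: "p \<in> P d \<Longrightarrow> p \<in> carrier R" using P_B cB by blast

lemma P_suc: "p \<in> P d \<Longrightarrow> r \<in> R0 \<Longrightarrow> p \<oplus> r \<otimes> t [^] d \<in> P (Suc d)"
  by auto

lemma P_sucE: "q \<in> P (Suc d) \<Longrightarrow> (\<And>p r. q = p \<oplus> r \<otimes> t [^] d \<Longrightarrow> p \<in> P d \<Longrightarrow> r \<in> R0 \<Longrightarrow> thesis) \<Longrightarrow> thesis"
  by auto

lemma P_zero: "\<zero> \<in> P d"
proof (induction d)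
  case 0 then show ?case by simp
next
  case (Suc d)
  have "\<zero> \<oplus> \<zero> \<otimes> t [^] d \<in> P (Suc d)" using Suc subr_zero[OF subrR0] by (intro P_suc)
  then show ?case using tpowc by simp
qed

lemma P_mono: "p \<in> P d \<Longrightarrow> p \<in> P (Suc d)"
proof -
  assume p: "p \<in> P d"
  have "p \<oplus> \<zero> \<otimes> t [^] d \<in> P (Suc d)" using p subr_zero[OF subrR0] by (intro P_suc)
  then show ?thesis using tpowc P_c[OF p] by simp
qed

lemma P_mono_le: "d \<le> e \<Longrightarrow> P d \<subseteq> P e"
  by (induction rule: dec_induct) (use P_mono in blast)+

lemma P_add: "p \<in> P d \<Longrightarrow> q \<in> P d \<Longrightarrow> p \<oplus> q \<in> P d"
proof (induction d arbitrary: p q)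
  case 0 then show ?case by simp
next
  case (Suc d)
  from Suc.prems obtain p1 r1 q1 r2 where p: "p = p1 \<oplus> r1 \<otimes> t [^] d" "p1 \<in> P d" "r1 \<in> R0"
    and q: "q = q1 \<oplus> r2 \<otimes> t [^] d" "q1 \<in> P d" "r2 \<in> R0" by (auto elim!: P_sucE)
  have "p \<oplus> q = (p1 \<oplus> q1) \<oplus> (r1 \<oplus> r2) \<otimes> t [^] d"
    using p q P_c R0c tpowc by (simp add: l_distr a_ac)
  then show ?case using P_suc[OF Suc.IH[OF p(2) q(2)] subr_add[OF subrR0 p(3) q(3)]] by simp
qed

lemma P_neg: "p \<in> P d \<Longrightarrow> \<ominus> p \<in> P d"
proof (induction d arbitrary: p)
  case 0 then show ?case by simp
next
  case (Suc d)
  from Suc.prems obtain p1 r1 where p: "p = p1 \<oplus> r1 \<otimes> t [^] d" "p1 \<in> P d" "r1 \<in> R0"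
    by (auto elim!: P_sucE)
  have "\<ominus> p = (\<ominus> p1) \<oplus> (\<ominus> r1) \<otimes> t [^] d"
    using p P_c R0c tpowc by (simp add: minus_add l_minus)
  then show ?case using P_suc[OF Suc.IH[OF p(2)] subr_neg[OF subrR0 p(3)]] by simp
qed

lemma P_lmul: "s \<in> R0 \<Longrightarrow> p \<in> P d \<Longrightarrow> s \<otimes> p \<in> P d"
proof (induction d arbitrary: p)
  case 0 then show ?case using R0c by simp
next
  case (Suc d)
  from Suc.prems obtain p1 r1 where p: "p = p1 \<oplus> r1 \<otimes> t [^] d" "p1 \<in> P d" "r1 \<in> R0"
    by (auto elim!: P_sucE)
  have "s \<otimes> p = (s \<otimes> p1) \<oplus> (s \<otimes> r1) \<otimes> t [^] d"
    using p P_c R0c tpowc Suc.prems by (simp add: r_distr m_assoc)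
  then show ?case using P_suc[OF Suc.IH[OF Suc.prems(1) p(2)] subr_mul[OF subrR0 Suc.prems(1) p(3)]] by simp
qed

lemma P_shift: "p \<in> P d \<Longrightarrow> p \<otimes> t \<in> P (Suc d)"
proof (induction d arbitrary: p)
  case 0 then show ?case using tc P_zero[of 1] by simp
next
  case (Suc d)
  from Suc.prems obtain p1 r1 where p: "p = p1 \<oplus> r1 \<otimes> t [^] d" "p1 \<in> P d" "r1 \<in> R0"
    by (auto elim!: P_sucE)
  have "p \<otimes> t = (p1 \<otimes> t) \<oplus> r1 \<otimes> t [^] (Suc d)"
    using p P_c R0c tpowc tc by (simp add: l_distr m_assoc)
  then show ?case using Suc p by (metis P_suc)
qed

lemma P_tpow: "p \<in> P d \<Longrightarrow> p \<otimes> t [^] (e::nat) \<in> P (d + e)"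
proof (induction e)
  case 0 then show ?case using P_c by simp
next
  case (Suc e)
  have "p \<otimes> t [^] (Suc e) = (p \<otimes> t [^] e) \<otimes> t" using Suc P_c tc tpowc by (simp add: m_assoc)
  then show ?case using P_shift[OF Suc.IH[OF Suc.prems]] by simp
qed

lemma tpow_comm: "r \<in> R0 \<Longrightarrow> eqz (t [^] (n::nat) \<otimes> r) (r \<otimes> t [^] n)"
proof (induction n)
  case 0 then show ?case using R0B R0c eqz_refl by auto
next
  case (Suc n)
  have rB: "r \<in> B" using Suc R0B by blast
  have "t [^] Suc n \<otimes> r = t [^] n \<otimes> (t \<otimes> r)" using Suc R0c tc tpowc by (simp add: m_assoc)
  moreover have "eqz (t [^] n \<otimes> (t \<otimes> r)) (t [^] n \<otimes> (r \<otimes> t))"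
    using comm[OF Suc.prems] tpowB by (rule eqz_lmul)
  moreover have "t [^] n \<otimes> (r \<otimes> t) = (t [^] n \<otimes> r) \<otimes> t" using Suc R0c tc tpowc by (simp add: m_assoc)
  moreover have "eqz ((t [^] n \<otimes> r) \<otimes> t) ((r \<otimes> t [^] n) \<otimes> t)"
    using Suc.IH[OF Suc.prems] tB by (rule eqz_rmul)
  moreover have "(r \<otimes> t [^] n) \<otimes> t = r \<otimes> t [^] Suc n" using Suc R0c tc tpowc by (simp add: m_assoc)
  ultimately show ?case by (metis eqz_trans)
qed

lemma P_rmul: "s \<in> R0 \<Longrightarrow> p \<in> P d \<Longrightarrow> \<exists>q\<in>P d. eqz (p \<otimes> s) q"
proof (induction d arbitrary: p)
  case 0 then show ?case using R0c subr_zero[OF subrB] by (simp add: eqz_refl)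
next
  case (Suc d)
  from Suc.prems obtain p1 r1 where p: "p = p1 \<oplus> r1 \<otimes> t [^] d" "p1 \<in> P d" "r1 \<in> R0"
    by (auto elim!: P_sucE)
  obtain q1 where q1: "q1 \<in> P d" "eqz (p1 \<otimes> s) q1" using Suc p by blast
  have r1B: "r1 \<in> B" and sB: "s \<in> B" using p Suc R0B by auto
  have "p \<otimes> s = (p1 \<otimes> s) \<oplus> r1 \<otimes> (t [^] d \<otimes> s)"
    using p P_c R0c tpowc Suc.prems by (simp add: l_distr m_assoc)
  moreover have "eqz ((p1 \<otimes> s) \<oplus> r1 \<otimes> (t [^] d \<otimes> s)) (q1 \<oplus> r1 \<otimes> (s \<otimes> t [^] d))"
    using q1(2) eqz_lmul[OF tpow_comm[OF Suc.prems(1)] r1B] by (rule eqz_add)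
  moreover have "q1 \<oplus> r1 \<otimes> (s \<otimes> t [^] d) = q1 \<oplus> (r1 \<otimes> s) \<otimes> t [^] d"
    using q1 P_c R0c tpowc Suc.prems p by (simp add: m_assoc)
  moreover have "q1 \<oplus> (r1 \<otimes> s) \<otimes> t [^] d \<in> P (Suc d)"
    using q1 p Suc.prems subr_mul[OF subrR0] by (intro P_suc) auto
  ultimately show ?case by (metis)
qed

lemma P_mul: "p \<in> P d \<Longrightarrow> q \<in> P e \<Longrightarrow> \<exists>u\<in>P (d + e). eqz (p \<otimes> q) u"
proof (induction e arbitrary: q)
  case 0 then show ?case using P_c P_zero subr_zero[OF subrB] by (auto intro!: bexI[of _ \<zero>] eqz_refl)
next
  case (Suc e)
  from Suc.prems obtain q1 s where q: "q = q1 \<oplus> s \<otimes> t [^] e" "q1 \<in> P e" "s \<in> R0"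
    by (auto elim!: P_sucE)
  obtain u1 where u1: "u1 \<in> P (d + e)" "eqz (p \<otimes> q1) u1" using Suc q by blast
  obtain v where v: "v \<in> P d" "eqz (p \<otimes> s) v" using P_rmul[OF q(3) Suc.prems(1)] by blast
  have "p \<otimes> q = p \<otimes> q1 \<oplus> (p \<otimes> s) \<otimes> t [^] e"
    using q Suc.prems P_c R0c tpowc by (simp add: r_distr m_assoc)
  moreover have "eqz (p \<otimes> q1 \<oplus> (p \<otimes> s) \<otimes> t [^] e) (u1 \<oplus> v \<otimes> t [^] e)"
    using u1(2) eqz_rmul[OF v(2) tpowB] by (rule eqz_add)
  moreover have "u1 \<oplus> v \<otimes> t [^] e \<in> P (d + Suc e)"
  proof -
    have "u1 \<in> P (d + Suc e)" using u1 P_mono by simp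
    moreover have "v \<otimes> t [^] e \<in> P (d + Suc e)" using P_tpow[OF v(1), of e] P_mono by simp
    ultimately show ?thesis by (rule P_add)
  qed
  ultimately show ?case by metis
qed

lemma cover: "b \<in> B \<Longrightarrow> \<exists>d. \<exists>p\<in>P d. eqz b p"
proof -
  assume "b \<in> B"
  then have "b \<in> gcl R (R0 \<union> {t})" using Beq by simp
  then show ?thesis
  proof (induction rule: gcl.induct)
    case (gcl_gen a)
    then show ?case
    proof
      assume a: "a \<in> R0"
      have "\<zero> \<oplus> a \<otimes> t [^] (0::nat) \<in> P (Suc 0)" by (rule P_suc[OF P_zero a])
      moreover have "\<zero> \<oplus> a \<otimes> t [^] (0::nat) = a" using a R0c by simp
      ultimately show ?thesis using a R0B eqz_refl by (metis subsetD)
    next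
      assume "a \<in> {t}"
      then have a: "a = t" by simp
      have "\<zero> \<oplus> \<one> \<otimes> t [^] (Suc 0) \<in> P (Suc (Suc 0))" by (rule P_suc[OF P_zero subr_one[OF subrR0]])
      moreover have "\<zero> \<oplus> \<one> \<otimes> t [^] (Suc 0) = a" using a tc by simp
      ultimately show ?thesis using tB a eqz_refl by metis
    qed
  next
    case gcl_one
    have "\<zero> \<oplus> \<one> \<otimes> t [^] (0::nat) \<in> P (Suc 0)" by (rule P_suc[OF P_zero subr_one[OF subrR0]])
    moreover have "\<zero> \<oplus> \<one> \<otimes> t [^] (0::nat) = \<one>" by simp
    ultimately show ?case using subr_one[OF subrB] eqz_refl by metis
  next
    case (gcl_add a b)
    then obtain d p e q where "p \<in> P d" "eqz a p" "q \<in> P e" "eqz b q" by blast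
    moreover have "P d \<subseteq> P (max d e)" "P e \<subseteq> P (max d e)"
      using P_mono_le[of d "max d e"] P_mono_le[of e "max d e"] by auto
    ultimately show ?case using P_add eqz_add by blast
  next
    case (gcl_mul a b)
    then obtain d p e q where "p \<in> P d" "eqz a p" "q \<in> P e" "eqz b q" by blast
    then show ?case using P_mul eqz_mul eqz_trans by meson
  next
    case (gcl_neg a)
    then show ?case using P_neg eqz_neg by blast
  qed
qed

definition Ld :: "nat \<Rightarrow> 'a set \<Rightarrow> 'a set" where
  "Ld d I = {r \<in> R0. \<exists>f\<in>I. \<exists>p\<in>P d. eqz f (p \<oplus> r \<otimes> t [^] d)}"

lemma LdI: "r \<in> R0 \<Longrightarrow> f \<in> I \<Longrightarrow> p \<in> P d \<Longrightarrow> eqz f (p \<oplus> r \<otimes> t [^] d) \<Longrightarrow> r \<in> Ld d I"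
  unfolding Ld_def by blast

lemma Ld_mono_I: "I \<subseteq> I' \<Longrightarrow> Ld d I \<subseteq> Ld d I'"
  unfolding Ld_def by blast

lemma Ld_mono_d: assumes I: "bideal R B I" shows "Ld d I \<subseteq> Ld (Suc d) I"
proof
  fix r assume "r \<in> Ld d I"
  then obtain f p where r: "r \<in> R0" "f \<in> I" "p \<in> P d" "eqz f (p \<oplus> r \<otimes> t [^] d)" by (auto simp: Ld_def)
  have "eqz (f \<otimes> t) ((p \<oplus> r \<otimes> t [^] d) \<otimes> t)" using r(4) tB by (rule eqz_rmul)
  moreover have "(p \<oplus> r \<otimes> t [^] d) \<otimes> t = p \<otimes> t \<oplus> r \<otimes> t [^] Suc d"
    using r P_c R0c tc tpowc by (simp add: l_distr m_assoc)
  moreover have "f \<otimes> t \<in> I" using bideal_rmul[OF I r(2) tB] .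
  ultimately show "r \<in> Ld (Suc d) I" using r P_shift LdI by (metis eqz_trans eqz_eq eqzD(2))
qed

lemma Ld_mono: "bideal R B I' \<Longrightarrow> d \<le> d' \<Longrightarrow> I \<subseteq> I' \<Longrightarrow> Ld d I \<subseteq> Ld d' I'"
proof -
  assume I': "bideal R B I'" and dd: "d \<le> d'" and II: "I \<subseteq> I'"
  have "Ld d I' \<subseteq> Ld d' I'" using dd by (induction rule: dec_induct) (use Ld_mono_d[OF I'] in blast)+
  then show ?thesis using Ld_mono_I[OF II] by blast
qed

lemma Ld_bideal:
  assumes I: "bideal R B I" and ZI: "Z \<subseteq> I"
  shows "bideal R R0 (Ld d I)" and "Z \<inter> R0 \<subseteq> Ld d I"
proof -
  have IB: "f \<in> I \<Longrightarrow> f \<in> B" for f using bideal_sub[OF I] by blast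
  show "Z \<inter> R0 \<subseteq> Ld d I"
  proof
    fix z assume z: "z \<in> Z \<inter> R0"
    have "z \<otimes> t [^] d \<in> I" using z ZI bideal_rmul[OF I _ tpowB] by blast
    moreover have "\<zero> \<oplus> z \<otimes> t [^] d = z \<otimes> t [^] d" using z R0c tpowc by simp
    ultimately show "z \<in> Ld d I" using z P_zero IB eqz_refl LdI by (metis IntD2)
  qed
  show "bideal R R0 (Ld d I)" unfolding bideal_def
  proof (intro conjI ballI)
    show "Ld d I \<subseteq> R0" by (auto simp: Ld_def)
    have "\<zero> \<in> I" using bideal_zero[OF I] .
    moreover have "\<zero> \<oplus> \<zero> \<otimes> t [^] d = \<zero>" using tpowc by simp
    ultimately show "\<zero> \<in> Ld d I" using P_zero subr_zero[OF subrR0] subr_zero[OF subrB] eqz_refl LdI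
      by metis
  next
    fix a b assume "a \<in> Ld d I" "b \<in> Ld d I"
    then obtain f p g q where a: "a \<in> R0" "f \<in> I" "p \<in> P d" "eqz f (p \<oplus> a \<otimes> t [^] d)"
      and b: "b \<in> R0" "g \<in> I" "q \<in> P d" "eqz g (q \<oplus> b \<otimes> t [^] d)" by (auto simp: Ld_def)
    have "eqz (f \<oplus> g) ((p \<oplus> a \<otimes> t [^] d) \<oplus> (q \<oplus> b \<otimes> t [^] d))" using a b eqz_add by blast
    moreover have "(p \<oplus> a \<otimes> t [^] d) \<oplus> (q \<oplus> b \<otimes> t [^] d) = (p \<oplus> q) \<oplus> (a \<oplus> b) \<otimes> t [^] d"
      using a b P_c R0c tpowc by (simp add: l_distr a_ac)
    ultimately show "a \<oplus> b \<in> Ld d I"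
      using LdI[OF subr_add[OF subrR0 a(1) b(1)] bideal_add[OF I a(2) b(2)] P_add[OF a(3) b(3)]] by simp
  next
    fix a assume "a \<in> Ld d I"
    then obtain f p where a: "a \<in> R0" "f \<in> I" "p \<in> P d" "eqz f (p \<oplus> a \<otimes> t [^] d)" by (auto simp: Ld_def)
    have "eqz (\<ominus> f) (\<ominus> (p \<oplus> a \<otimes> t [^] d))" using a eqz_neg by blast
    moreover have "\<ominus> (p \<oplus> a \<otimes> t [^] d) = (\<ominus> p) \<oplus> (\<ominus> a) \<otimes> t [^] d"
      using a P_c R0c tpowc by (simp add: minus_add l_minus)
    ultimately show "\<ominus> a \<in> Ld d I"
      using LdI[OF subr_neg[OF subrR0 a(1)] bideal_neg[OF I a(2)] P_neg[OF a(3)]] by simp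
  next
    fix a s assume as: "a \<in> Ld d I" "s \<in> R0"
    then obtain f p where a: "a \<in> R0" "f \<in> I" "p \<in> P d" "eqz f (p \<oplus> a \<otimes> t [^] d)" by (auto simp: Ld_def)
    have sB: "s \<in> B" and aB: "a \<in> B" using as a R0B by auto
    have "eqz (s \<otimes> f) (s \<otimes> (p \<oplus> a \<otimes> t [^] d))" using a(4) sB by (rule eqz_lmul)
    moreover have "s \<otimes> (p \<oplus> a \<otimes> t [^] d) = s \<otimes> p \<oplus> (s \<otimes> a) \<otimes> t [^] d"
      using a as P_c R0c tpowc by (simp add: r_distr m_assoc)
    ultimately show "s \<otimes> a \<in> Ld d I"
      using LdI[OF subr_mul[OF subrR0 as(2) a(1)] bideal_lmul[OF I a(2) sB] P_lmul[OF as(2) a(3)]] by simp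
    obtain q where q: "q \<in> P d" "eqz (p \<otimes> s) q" using P_rmul[OF as(2) a(3)] by blast
    have "eqz (f \<otimes> s) ((p \<oplus> a \<otimes> t [^] d) \<otimes> s)" using a(4) sB by (rule eqz_rmul)
    moreover have "(p \<oplus> a \<otimes> t [^] d) \<otimes> s = p \<otimes> s \<oplus> a \<otimes> (t [^] d \<otimes> s)"
      using a as P_c R0c tpowc by (simp add: l_distr m_assoc)
    moreover have "eqz (p \<otimes> s \<oplus> a \<otimes> (t [^] d \<otimes> s)) (q \<oplus> a \<otimes> (s \<otimes> t [^] d))"
      using q(2) eqz_lmul[OF tpow_comm[OF as(2)] aB] by (rule eqz_add)
    moreover have "q \<oplus> a \<otimes> (s \<otimes> t [^] d) = q \<oplus> (a \<otimes> s) \<otimes> t [^] d"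
      using a as q P_c R0c tpowc by (simp add: m_assoc)
    ultimately have "eqz (f \<otimes> s) (q \<oplus> (a \<otimes> s) \<otimes> t [^] d)" by (metis eqz_trans)
    then show "a \<otimes> s \<in> Ld d I"
      using LdI[OF subr_mul[OF subrR0 a(1) as(2)] bideal_rmul[OF I a(2) sB] q(1)] by simp
  qed
qed

lemma Ld_key:
  assumes I: "bideal R B I" and J: "bideal R B J" and ZI: "Z \<subseteq> I" and IJ: "I \<subseteq> J"
    and L: "\<And>d. Ld d J \<subseteq> Ld d I"
  shows "J \<subseteq> I"
proof -
  have main: "\<forall>g\<in>J. \<forall>q\<in>P d. eqz g q \<longrightarrow> g \<in> I" for d
  proof (induction d)
    case 0
    show ?case
    proof (intro ballI impI)
      fix g q assume g: "g \<in> J" "q \<in> P 0" "eqz g q"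
      then have "q = \<zero>" by simp
      then have "g \<ominus> \<zero> \<in> Z" using g eqzD(3) by blast
      moreover have "g \<ominus> \<zero> = g" using g(3) eqzD(1) cB minus_zero_r by blast
      ultimately show "g \<in> I" using ZI by auto
    qed
  next
    case (Suc d)
    show ?case
    proof (intro ballI impI)
      fix g q assume g: "g \<in> J" "q \<in> P (Suc d)" "eqz g q"
      then obtain p r where q: "q = p \<oplus> r \<otimes> t [^] d" "p \<in> P d" "r \<in> R0" by (auto elim!: P_sucE)
      have "r \<in> Ld d J" using g q unfolding Ld_def by blast
      then have "r \<in> Ld d I" using L by blast
      then obtain f p' where f: "f \<in> I" "p' \<in> P d" "eqz f (p' \<oplus> r \<otimes> t [^] d)" by (auto simp: Ld_def)
      have "g \<ominus> f \<in> J" using g f IJ bideal_minus[OF J] by blast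
      moreover have "eqz (g \<ominus> f) ((p \<oplus> r \<otimes> t [^] d) \<ominus> (p' \<oplus> r \<otimes> t [^] d))"
        using g(3) q(1) f(3) by (metis eqz_minus)
      moreover have "(p \<oplus> r \<otimes> t [^] d) \<ominus> (p' \<oplus> r \<otimes> t [^] d) = p \<ominus> p'"
        using q f P_c R0c tpowc by (simp add: minus_addadd minus_self)
      moreover have "p \<ominus> p' \<in> P d" using q f P_add P_neg by (simp add: minus_eq)
      ultimately have "g \<ominus> f \<in> I" using Suc by metis
      moreover have "g = (g \<ominus> f) \<oplus> f" using g f bideal_sub[OF J] IJ cB minus_add_cancel by (metis subsetD)
      ultimately show "g \<in> I" using f bideal_add[OF I] by metis
    qed
  qed
  show ?thesis
  proof
    fix g assume "g \<in> J"
    then obtain d q where "q \<in> P d" "eqz g q" using cover bideal_sub[OF J] by blast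
    then show "g \<in> I" using main \<open>g \<in> J\<close> by blast
  qed
qed

theorem hilbert: assumes A: "accz R R0 (Z \<inter> R0)" shows "accz R B Z"
proof (rule accI)
  fix I :: "nat \<Rightarrow> 'a set"
  assume Ib: "\<And>m. bideal R B (I m)" and IZ: "\<And>m. Z \<subseteq> I m" and Is: "\<And>m. I m \<subseteq> I (Suc m)"
  have Im: "m \<le> m' \<Longrightarrow> I m \<subseteq> I m'" for m m' using chain_mono[of I, OF Is] by blast
  note LB = Ld_bideal[OF Ib IZ]
  have "\<exists>N. \<forall>k\<ge>N. Ld k (I k) = Ld N (I N)"
  proof (rule accD[OF A])
    fix m show "bideal R R0 (Ld m (I m))" by (rule LB(1))
    show "Z \<inter> R0 \<subseteq> Ld m (I m)" by (rule LB(2))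
    show "Ld m (I m) \<subseteq> Ld (Suc m) (I (Suc m))" by (rule Ld_mono[OF Ib _ Is]) simp
  qed
  then obtain N where N: "\<And>k. k \<ge> N \<Longrightarrow> Ld k (I k) = Ld N (I N)" by blast
  have "\<forall>d. \<exists>M. \<forall>m\<ge>M. Ld d (I m) = Ld d (I M)"
  proof
    fix d
    show "\<exists>M. \<forall>m\<ge>M. Ld d (I m) = Ld d (I M)"
    proof (rule accD[OF A])
      fix m show "bideal R R0 (Ld d (I m))" by (rule LB(1))
      show "Z \<inter> R0 \<subseteq> Ld d (I m)" by (rule LB(2))
      show "Ld d (I m) \<subseteq> Ld d (I (Suc m))" by (rule Ld_mono_I[OF Is])
    qed
  qed
  then obtain Mf where Mf: "\<And>d m. m \<ge> Mf d \<Longrightarrow> Ld d (I m) = Ld d (I (Mf d))" by metis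
  define M where "M = N + (\<Sum>d<N. Mf d)"
  have MN: "N \<le> M" by (simp add: M_def)
  have MMf: "d < N \<Longrightarrow> Mf d \<le> M" for d
  proof -
    assume "d < N"
    then have "Mf d \<le> (\<Sum>d<N. Mf d)" by (intro member_le_sum) auto
    then show ?thesis by (simp add: M_def)
  qed
  have "\<forall>m\<ge>M. I m = I M"
  proof (intro allI impI)
    fix m assume m: "m \<ge> M"
    have "I m \<subseteq> I M"
    proof (rule Ld_key[OF Ib Ib IZ Im[OF m]])
      fix d
      show "Ld d (I m) \<subseteq> Ld d (I M)"
      proof (cases "d < N")
        case True
        have e1: "Ld d (I m) = Ld d (I (Mf d))" by (rule Mf) (use MMf[OF True] m in linarith)
        have e2: "Ld d (I M) = Ld d (I (Mf d))" by (rule Mf) (use MMf[OF True] in linarith)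
        show ?thesis unfolding e1 e2 by (rule subset_refl)
      next
        case False
        have "Ld d (I m) \<subseteq> Ld (max d m) (I (max d m))" by (rule Ld_mono[OF Ib]) (auto intro: Im[of m "max d m", THEN subsetD])
        also have "\<dots> = Ld N (I N)" by (rule N) (use False in linarith)
        also have "\<dots> \<subseteq> Ld d (I M)" by (rule Ld_mono[OF Ib]) (use False Im[OF MN] in auto)
        finally show ?thesis .
      qed
    qed
    then show "I m = I M" using Im[OF m] by blast
  qed
  then show "\<exists>N. \<forall>m\<ge>N. I m = I N" by blast
qed

end

context ring begin

lemma asum_carrier: "U \<subseteq> carrier R \<Longrightarrow> asum R U \<subseteq> carrier R"
proof
  fix a assume U: "U \<subseteq> carrier R" and a: "a \<in> asum R U"
  from a show "a \<in> carrier R" by (induction rule: asum.induct) (use U in auto)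
qed

lemma asum_sub: "U \<subseteq> asum R U" by (auto intro: asum.intros)

lemma asum_mono: "U \<subseteq> asum R V \<Longrightarrow> asum R U \<subseteq> asum R V"
proof
  fix a assume U: "U \<subseteq> asum R V" and a: "a \<in> asum R U"
  from a show "a \<in> asum R V" by (induction rule: asum.induct) (use U in \<open>auto intro: asum.intros\<close>)
qed

lemma asum_mul:
  assumes U: "U \<subseteq> carrier R" and V: "V \<subseteq> carrier R"
    and XY: "\<And>a b. a \<in> U \<Longrightarrow> b \<in> V \<Longrightarrow> a \<otimes> b \<in> asum R W"
    and a: "a \<in> asum R U" and b: "b \<in> asum R V"
  shows "a \<otimes> b \<in> asum R W"
proof -
  have cU: "u \<in> asum R U \<Longrightarrow> u \<in> carrier R" for u using asum_carrier[OF U] by blast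
  have cV: "u \<in> asum R V \<Longrightarrow> u \<in> carrier R" for u using asum_carrier[OF V] by blast
  have one: "a \<otimes> b \<in> asum R W" if a: "a \<in> U" and b: "b \<in> asum R V" for a b
  proof -
    have ac: "a \<in> carrier R" using a U by blast
    from b show ?thesis
  proof (induction rule: asum.induct)
    case (asum_gen b) then show ?case using XY a by blast
  next
    case asum_zero
    show ?case using ac by (auto intro: asum.intros)
  next
    case (asum_add b1 b2) then show ?case using ac cV by (auto simp: r_distr intro: asum.intros)
  next
    case (asum_neg b) then show ?case using ac cV by (auto simp: r_minus intro: asum.intros)
  qed
  qed
  from a show ?thesis
  proof (induction rule: asum.induct)
    case (asum_gen a) then show ?case using one b by blast
  next
    case asum_zero then show ?case using b cV by (auto intro: asum.intros)
  next
    case (asum_add a1 a2) then show ?case using b cU cV by (auto simp: l_distr intro: asum.intros)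
  next
    case (asum_neg a) then show ?case using b cU cV by (auto simp: l_minus intro: asum.intros)
  qed
qed

end

fun Esum :: "('a,'b) ring_scheme \<Rightarrow> 'a \<Rightarrow> 'a \<Rightarrow> 'a \<Rightarrow> nat \<Rightarrow> 'a" where
  "Esum R x y p 0 = \<zero>\<^bsub>R\<^esub>"
| "Esum R x y p (Suc N) = Esum R x y p N \<oplus>\<^bsub>R\<^esub> x [^]\<^bsub>R\<^esub> N \<otimes>\<^bsub>R\<^esub> p \<otimes>\<^bsub>R\<^esub> y [^]\<^bsub>R\<^esub> N"

locale nctx = bctx +
  fixes B' :: "'a set" and x :: 'a and y :: 'a
  assumes subrB': "subr R B'" and B'B: "B' \<subseteq> B" and xB: "x \<in> B" and yB: "y \<in> B"
    and Bsub: "B \<subseteq> gcl R (B' \<union> {x, y})"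
    and yx: "y \<otimes> x = \<one>" and cx: "b \<in> B' \<Longrightarrow> x \<otimes> b = b \<otimes> x" and cy: "b \<in> B' \<Longrightarrow> y \<otimes> b = b \<otimes> y"
begin

definition p where "p = \<one> \<ominus> x \<otimes> y"

lemma xc: "x \<in> carrier R" using xB cB by blast
lemma yc: "y \<in> carrier R" using yB cB by blast
lemma B'c: "b \<in> B' \<Longrightarrow> b \<in> carrier R" using B'B cB by blast
lemma pB: "p \<in> B" unfolding p_def using xB yB subr_one[OF subrB] subr_minus[OF subrB] subr_mul[OF subrB] by blast
lemma pc: "p \<in> carrier R" using pB cB by blast
lemma xpB: "x [^] (n::nat) \<in> B" using subr_pow[OF subrB xB] .
lemma ypB: "y [^] (n::nat) \<in> B" using subr_pow[OF subrB yB] .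
lemma xpc: "x [^] (n::nat) \<in> carrier R" using xpB cB by blast
lemma ypc: "y [^] (n::nat) \<in> carrier R" using ypB cB by blast

lemma yp: "y \<otimes> p = \<zero>"
proof -
  have "y \<otimes> p = y \<otimes> \<one> \<ominus> y \<otimes> (x \<otimes> y)" unfolding p_def using xc yc by (simp only: minus_lmul one_closed m_closed)
  also have "\<dots> = y \<ominus> y" using xc yc yx by (simp add: m_assoc[symmetric])
  finally show ?thesis using yc minus_self by simp
qed

lemma px: "p \<otimes> x = \<zero>"
proof -
  have "p \<otimes> x = \<one> \<otimes> x \<ominus> (x \<otimes> y) \<otimes> x" unfolding p_def using xc yc by (simp only: minus_rmul one_closed m_closed)
  also have "\<dots> = x \<ominus> x" using xc yc yx by (simp add: m_assoc)
  finally show ?thesis using xc minus_self by simp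
qed

lemma pp: "p \<otimes> p = p"
proof -
  have "p \<otimes> p = p \<otimes> (\<one> \<ominus> x \<otimes> y)" by (simp only: p_def[symmetric])
  also have "\<dots> = p \<otimes> \<one> \<ominus> p \<otimes> (x \<otimes> y)" using pc xc yc by (simp only: minus_lmul one_closed m_closed)
  also have "\<dots> = p \<otimes> \<one> \<ominus> (p \<otimes> x) \<otimes> y" using pc xc yc by (simp only: m_assoc)
  finally have "p \<otimes> p = p \<otimes> \<one> \<ominus> (p \<otimes> x) \<otimes> y" .
  then show ?thesis using px pc yc by (simp add: minus_zero_r)
qed

lemma cp: "b \<in> B' \<Longrightarrow> p \<otimes> b = b \<otimes> p"
proof -
  assume b: "b \<in> B'"
  have bc: "b \<in> carrier R" using b B'c by blast
  have "p \<otimes> b = \<one> \<otimes> b \<ominus> (x \<otimes> y) \<otimes> b" unfolding p_def using bc xc yc by (simp only: minus_rmul one_closed m_closed)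
  also have "\<dots> = b \<ominus> x \<otimes> (y \<otimes> b)" using bc xc yc by (simp add: m_assoc)
  also have "\<dots> = b \<ominus> (x \<otimes> b) \<otimes> y" using b cy bc xc yc by (simp add: m_assoc)
  also have "\<dots> = b \<ominus> b \<otimes> (x \<otimes> y)" using b cx bc xc yc by (simp add: m_assoc)
  also have "\<dots> = b \<otimes> \<one> \<ominus> b \<otimes> (x \<otimes> y)" using bc by simp
  also have "\<dots> = b \<otimes> p" unfolding p_def using bc xc yc by (simp only: minus_lmul one_closed m_closed)
  finally show ?thesis .
qed

lemma cxp: "b \<in> B' \<Longrightarrow> x [^] (n::nat) \<otimes> b = b \<otimes> x [^] n"
proof (induction n)
  case 0 then show ?case using B'c by simp
next
  case (Suc n)
  have "x [^] Suc n \<otimes> b = x [^] n \<otimes> (x \<otimes> b)" using Suc B'c xc by (simp add: m_assoc)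
  also have "\<dots> = x [^] n \<otimes> (b \<otimes> x)" using Suc cx by simp
  also have "\<dots> = (x [^] n \<otimes> b) \<otimes> x" using B'c[OF Suc.prems] xc by (simp add: m_assoc)
  also have "\<dots> = (b \<otimes> x [^] n) \<otimes> x" using Suc by simp
  also have "\<dots> = b \<otimes> x [^] Suc n" using Suc B'c xc by (simp add: m_assoc)
  finally show ?case .
qed
lemma cyp: "b \<in> B' \<Longrightarrow> y [^] (n::nat) \<otimes> b = b \<otimes> y [^] n"
proof (induction n)
  case 0 then show ?case using B'c by simp
next
  case (Suc n)
  have "y [^] Suc n \<otimes> b = y [^] n \<otimes> (y \<otimes> b)" using Suc B'c yc by (simp add: m_assoc)
  also have "\<dots> = y [^] n \<otimes> (b \<otimes> y)" using Suc cy by simp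
  also have "\<dots> = (y [^] n \<otimes> b) \<otimes> y" using B'c[OF Suc.prems] yc by (simp add: m_assoc)
  also have "\<dots> = (b \<otimes> y [^] n) \<otimes> y" using Suc by simp
  also have "\<dots> = b \<otimes> y [^] Suc n" using Suc B'c yc by (simp add: m_assoc)
  finally show ?case .
qed

lemma yx_suc: "y [^] Suc j \<otimes> x [^] Suc a = y [^] j \<otimes> x [^] a"
proof -
  have ex: "x [^] Suc a = x \<otimes> x [^] a" using nat_pow_Suc2[OF xc] .
  have ey: "y [^] Suc j = y [^] j \<otimes> y" by simp
  have "y [^] Suc j \<otimes> x [^] Suc a = (y [^] j \<otimes> y) \<otimes> (x \<otimes> x [^] a)"
    by (simp only: ex ey)
  also have "\<dots> = y [^] j \<otimes> (y \<otimes> x) \<otimes> x [^] a" using xc yc by (simp add: m_assoc)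
  finally have "y [^] Suc j \<otimes> x [^] Suc a = y [^] j \<otimes> (y \<otimes> x) \<otimes> x [^] a" .
  then show ?thesis using yx xc yc by simp
qed

lemma yxpow: "y [^] (j::nat) \<otimes> x [^] (a::nat) = (if j \<le> a then x [^] (a - j) else y [^] (j - a))"
proof (induction j arbitrary: a)
  case 0 then show ?case using xc by simp
next
  case (Suc j)
  show ?case
  proof (cases a)
    case 0 then show ?thesis using yc by simp
  next
    case (Suc a') then show ?thesis using Suc.IH yx_suc by simp
  qed
qed

lemma ypowp: "j > 0 \<Longrightarrow> y [^] (j::nat) \<otimes> p = \<zero>"
proof -
  assume "j > 0" then obtain k where "j = Suc k" using gr0_implies_Suc by blast
  then have "y [^] j \<otimes> p = y [^] k \<otimes> (y \<otimes> p)" using yc pc by (simp add: nat_pow_Suc m_assoc)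
  then show ?thesis using yp yc by simp
qed

lemma pxpow: "k > 0 \<Longrightarrow> p \<otimes> x [^] (k::nat) = \<zero>"
proof -
  assume "k > 0" then obtain j where "k = Suc j" using gr0_implies_Suc by blast
  moreover have ex: "x [^] Suc j = x \<otimes> x [^] j" using nat_pow_Suc2[OF xc] .
  ultimately have "p \<otimes> x [^] k = p \<otimes> (x \<otimes> x [^] j)" by simp
  then have "p \<otimes> x [^] k = (p \<otimes> x) \<otimes> x [^] j" using xc pc by (simp add: m_assoc)
  then show ?thesis using px xc by simp
qed

lemma yxpow_r: "w \<in> carrier R \<Longrightarrow> y [^] (j::nat) \<otimes> (x [^] (a::nat) \<otimes> w) = (if j \<le> a then x [^] (a - j) else y [^] (j - a)) \<otimes> w"
  using yxpow[of j a] xc yc by (simp add: m_assoc[symmetric])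
lemma ypowp_r: "w \<in> carrier R \<Longrightarrow> j > 0 \<Longrightarrow> y [^] (j::nat) \<otimes> (p \<otimes> w) = \<zero>"
  using ypowp[of j] yc pc by (simp add: m_assoc[symmetric])
lemma pxpow_r: "w \<in> carrier R \<Longrightarrow> k > 0 \<Longrightarrow> p \<otimes> (x [^] (k::nat) \<otimes> w) = \<zero>"
  using pxpow[of k] xc pc by (simp add: m_assoc[symmetric])
lemma lc_x: "b \<in> B' \<Longrightarrow> w \<in> carrier R \<Longrightarrow> b \<otimes> (x [^] (n::nat) \<otimes> w) = x [^] n \<otimes> (b \<otimes> w)"
  using cxp[of b n] B'c xc by (simp add: m_assoc[symmetric])
lemma lc_y: "b \<in> B' \<Longrightarrow> w \<in> carrier R \<Longrightarrow> b \<otimes> (y [^] (n::nat) \<otimes> w) = y [^] n \<otimes> (b \<otimes> w)"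
  using cyp[of b n] B'c yc by (simp add: m_assoc[symmetric])
lemma lc_p: "b \<in> B' \<Longrightarrow> w \<in> carrier R \<Longrightarrow> b \<otimes> (p \<otimes> w) = p \<otimes> (b \<otimes> w)"
  using cp[of b] B'c pc by (simp add: m_assoc[symmetric])
lemma pp_r: "w \<in> carrier R \<Longrightarrow> p \<otimes> (p \<otimes> w) = p \<otimes> w"
  using pp pc by (simp add: m_assoc[symmetric])
lemma xx_r: "w \<in> carrier R \<Longrightarrow> x [^] (i::nat) \<otimes> (x [^] (k::nat) \<otimes> w) = x [^] (i + k) \<otimes> w"
  using xc by (simp add: m_assoc[symmetric] nat_pow_mult)
lemma yy_r: "w \<in> carrier R \<Longrightarrow> y [^] (i::nat) \<otimes> (y [^] (k::nat) \<otimes> w) = y [^] (i + k) \<otimes> w"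
  using yc by (simp add: m_assoc[symmetric] nat_pow_mult)

definition Mon where "Mon = {x [^] (i::nat) \<otimes> (y [^] (j::nat) \<otimes> b) | i j b. b \<in> B'}"

lemma Mon_c: "Mon \<subseteq> carrier R" unfolding Mon_def using xc yc B'c by auto

lemma Mon_mul: "a \<in> Mon \<Longrightarrow> b \<in> Mon \<Longrightarrow> a \<otimes> b \<in> Mon"
proof -
  assume "a \<in> Mon" "b \<in> Mon"
  then obtain i j b1 k l b2 where a: "a = x [^] (i::nat) \<otimes> (y [^] (j::nat) \<otimes> b1)" "b1 \<in> B'"
    and b: "b = x [^] (k::nat) \<otimes> (y [^] (l::nat) \<otimes> b2)" "b2 \<in> B'" unfolding Mon_def by blast
  have e: "a \<otimes> b = x [^] i \<otimes> (y [^] j \<otimes> (x [^] k \<otimes> (y [^] l \<otimes> (b1 \<otimes> b2))))"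
    using a b xc yc B'c by (simp add: m_assoc lc_x lc_y)
  have bb: "b1 \<otimes> b2 \<in> B'" using a b subr_mul[OF subrB'] by blast
  show ?thesis
  proof (cases "j \<le> k")
    case True
    then have "a \<otimes> b = x [^] (i + (k - j)) \<otimes> (y [^] l \<otimes> (b1 \<otimes> b2))"
      using e a b xc yc B'c by (simp add: yxpow_r xx_r)
    then show ?thesis using bb unfolding Mon_def by blast
  next
    case False
    then have "a \<otimes> b = x [^] i \<otimes> (y [^] (j - k + l) \<otimes> (b1 \<otimes> b2))"
      using e a b xc yc B'c by (simp add: yxpow_r yy_r)
    then show ?thesis using bb unfolding Mon_def by blast
  qed
qed

lemma NF: "B \<subseteq> asum R Mon"
proof -
  have s: "subr R (asum R Mon)" unfolding subr_def
  proof (intro conjI ballI)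
    show "asum R Mon \<subseteq> carrier R" using asum_carrier[OF Mon_c] .
    have "x [^] (0::nat) \<otimes> (y [^] (0::nat) \<otimes> \<one>) \<in> Mon" unfolding Mon_def using subr_one[OF subrB'] by blast
    then show "\<one> \<in> asum R Mon" by (simp add: asum.intros)
  next
    fix a b assume "a \<in> asum R Mon" "b \<in> asum R Mon"
    then show "a \<oplus> b \<in> asum R Mon" by (rule asum_add)
    show "a \<otimes> b \<in> asum R Mon" by (rule asum_mul[OF Mon_c Mon_c _ \<open>a \<in> asum R Mon\<close> \<open>b \<in> asum R Mon\<close>]) (auto intro: asum_gen Mon_mul)
  next
    fix a assume "a \<in> asum R Mon" then show "\<ominus> a \<in> asum R Mon" by (rule asum_neg)
  qed
  have "B' \<union> {x, y} \<subseteq> Mon"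
  proof -
    have "b = x [^] (0::nat) \<otimes> (y [^] (0::nat) \<otimes> b)" if "b \<in> B'" for b using that B'c by simp
    moreover have "x = x [^] (1::nat) \<otimes> (y [^] (0::nat) \<otimes> \<one>)" using xc by simp
    moreover have "y = x [^] (0::nat) \<otimes> (y [^] (1::nat) \<otimes> \<one>)" using yc by simp
    ultimately show ?thesis unfolding Mon_def using subr_one[OF subrB'] by blast
  qed
  then have "gcl R (B' \<union> {x, y}) \<subseteq> asum R Mon" using gcl_least[OF s] asum_sub by blast
  then show ?thesis using Bsub by blast
qed

end

context ring begin
lemma asum_least: "subr R S \<Longrightarrow> U \<subseteq> S \<Longrightarrow> asum R U \<subseteq> S"
proof
  fix a assume S: "subr R S" and U: "U \<subseteq> S" and a: "a \<in> asum R U"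
  from a show "a \<in> S"
  proof (induction rule: asum.induct)
    case (asum_gen a) then show ?case using U by blast
  next
    case asum_zero then show ?case by (rule subr_zero[OF S])
  next
    case (asum_add a b) then show ?case using subr_add[OF S] by blast
  next
    case (asum_neg a) then show ?case using subr_neg[OF S] by blast
  qed
qed
end

context nctx begin

definition Gs where "Gs = {x [^] (a::nat) \<otimes> (p \<otimes> (b \<otimes> y [^] (c::nat))) | a b c. b \<in> B'}"
definition M where "M = asum R Gs"
definition F where "F = ssum Z M"

lemma Gs_B: "Gs \<subseteq> B"
proof
  fix g assume "g \<in> Gs"
  then obtain a b c where g: "g = x [^] (a::nat) \<otimes> (p \<otimes> (b \<otimes> y [^] (c::nat)))" "b \<in> B'"
    unfolding Gs_def by blast
  have "b \<in> B" using g B'B by blast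
  then show "g \<in> B" unfolding g(1)
    by (intro subr_mul[OF subrB] xpB pB ypB)
qed
lemma Gs_c: "Gs \<subseteq> carrier R" using Gs_B cB by blast
lemma M_B: "M \<subseteq> B" unfolding M_def using asum_least[OF subrB Gs_B] .
lemma M_c: "M \<subseteq> carrier R" using M_B cB by blast

lemma GsI: "b \<in> B' \<Longrightarrow> x [^] (a::nat) \<otimes> (p \<otimes> (b \<otimes> y [^] (c::nat))) \<in> Gs"
  unfolding Gs_def by blast

lemma Mon_Gs: "u \<in> Mon \<Longrightarrow> g \<in> Gs \<Longrightarrow> u \<otimes> g \<in> asum R Gs"
proof -
  assume "u \<in> Mon" "g \<in> Gs"
  then obtain i j b1 a b c where u: "u = x [^] (i::nat) \<otimes> (y [^] (j::nat) \<otimes> b1)" "b1 \<in> B'"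
    and g: "g = x [^] (a::nat) \<otimes> (p \<otimes> (b \<otimes> y [^] (c::nat)))" "b \<in> B'" unfolding Mon_def Gs_def by blast
  have bb: "b1 \<otimes> b \<in> B'" using u g subr_mul[OF subrB'] by blast
  have e: "u \<otimes> g = x [^] i \<otimes> (y [^] j \<otimes> (x [^] a \<otimes> (p \<otimes> (b1 \<otimes> (b \<otimes> y [^] c)))))"
    using u g xc yc pc B'c by (simp add: m_assoc lc_x lc_p)
  show ?thesis
  proof (cases "j \<le> a")
    case True
    then have "u \<otimes> g = x [^] (i + (a - j)) \<otimes> (p \<otimes> ((b1 \<otimes> b) \<otimes> y [^] c))"
      using e u g xc yc pc B'c by (simp add: yxpow_r xx_r m_assoc)
    then show ?thesis using GsI[OF bb] asum_gen by metis
  next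
    case False
    then have "u \<otimes> g = \<zero>"
      using e u g xc yc pc B'c by (simp add: yxpow_r ypowp_r)
    then show ?thesis using asum_zero by metis
  qed
qed

lemma Gs_Mon: "g \<in> Gs \<Longrightarrow> u \<in> Mon \<Longrightarrow> g \<otimes> u \<in> asum R Gs"
proof -
  assume "u \<in> Mon" "g \<in> Gs"
  then obtain i j b1 a b c where u: "u = x [^] (i::nat) \<otimes> (y [^] (j::nat) \<otimes> b1)" "b1 \<in> B'"
    and g: "g = x [^] (a::nat) \<otimes> (p \<otimes> (b \<otimes> y [^] (c::nat)))" "b \<in> B'" unfolding Mon_def Gs_def by blast
  have bb: "b \<otimes> b1 \<in> B'" using u g subr_mul[OF subrB'] by blast
  have e: "g \<otimes> u = x [^] a \<otimes> (p \<otimes> (b \<otimes> (y [^] c \<otimes> (x [^] i \<otimes> (y [^] j \<otimes> b1)))))"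
    using u g xc yc pc B'c by (simp add: m_assoc)
  show ?thesis
  proof (cases "c \<le> i")
    case True
    show ?thesis
    proof (cases "c = i")
      case True
      have W: "y [^] j \<otimes> b1 \<in> carrier R" using u yc B'c by simp
      have s1: "y [^] c \<otimes> (x [^] i \<otimes> (y [^] j \<otimes> b1)) = y [^] j \<otimes> b1"
        using yxpow_r[OF W, of c i] True W by simp
      have s2: "b \<otimes> (y [^] j \<otimes> b1) = (b \<otimes> b1) \<otimes> y [^] j"
        using cyp[OF u(2)] B'c u g yc by (simp add: m_assoc)
      have "g \<otimes> u = x [^] a \<otimes> (p \<otimes> ((b \<otimes> b1) \<otimes> y [^] j))"
        unfolding e s1 s2 ..
      then show ?thesis using GsI[OF bb] asum_gen by metis
    next
      case False
      have W: "y [^] j \<otimes> b1 \<in> carrier R" using u yc B'c by simp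
      have s1: "y [^] c \<otimes> (x [^] i \<otimes> (y [^] j \<otimes> b1)) = x [^] (i - c) \<otimes> (y [^] j \<otimes> b1)"
        using yxpow_r[OF W, of c i] \<open>c \<le> i\<close> by simp
      have s2: "b \<otimes> (x [^] (i - c) \<otimes> (y [^] j \<otimes> b1)) = x [^] (i - c) \<otimes> (b \<otimes> (y [^] j \<otimes> b1))"
        using lc_x[OF g(2) W] .
      have s3: "p \<otimes> (x [^] (i - c) \<otimes> (b \<otimes> (y [^] j \<otimes> b1))) = \<zero>"
        using pxpow_r W g(2) B'c \<open>c \<le> i\<close> False by simp
      have "g \<otimes> u = \<zero>" unfolding e s1 s2 s3 using xc by simp
      then show ?thesis using asum_zero by metis
    qed
  next
    case False
    have W: "y [^] j \<otimes> b1 \<in> carrier R" using u yc B'c by simp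
    have s1: "y [^] c \<otimes> (x [^] i \<otimes> (y [^] j \<otimes> b1)) = y [^] (c - i) \<otimes> (y [^] j \<otimes> b1)"
      using yxpow_r[OF W, of c i] False by simp
    have s2: "y [^] (c - i) \<otimes> (y [^] j \<otimes> b1) = b1 \<otimes> y [^] (c - i + j)"
      using yy_r[of b1 "c - i" j] cyp[OF u(2)] B'c u by simp
    have s3: "b \<otimes> (b1 \<otimes> y [^] (c - i + j)) = (b \<otimes> b1) \<otimes> y [^] (c - i + j)"
      using B'c u g yc by (simp add: m_assoc)
    have "g \<otimes> u = x [^] a \<otimes> (p \<otimes> ((b \<otimes> b1) \<otimes> y [^] (c - i + j)))"
      unfolding e s1 s2 s3 ..
    then show ?thesis using GsI[OF bb] asum_gen by metis
  qed
qed

lemma M_bideal: "bideal R B M"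
  unfolding bideal_def
proof (intro conjI ballI)
  show "M \<subseteq> B" by (rule M_B)
  show "\<zero> \<in> M" unfolding M_def by (rule asum_zero)
next
  fix a b assume "a \<in> M" "b \<in> M" then show "a \<oplus> b \<in> M" unfolding M_def by (rule asum_add)
next
  fix a assume "a \<in> M" then show "\<ominus> a \<in> M" unfolding M_def by (rule asum_neg)
next
  fix a b assume a: "a \<in> M" and b: "b \<in> B"
  have b': "b \<in> asum R Mon" using NF b by blast
  show "a \<otimes> b \<in> M" unfolding M_def
    by (rule asum_mul[OF Gs_c Mon_c _ a[unfolded M_def] b']) (rule Gs_Mon)
  show "b \<otimes> a \<in> M" unfolding M_def
    by (rule asum_mul[OF Mon_c Gs_c _ b' a[unfolded M_def]]) (rule Mon_Gs)
qed

lemma F_bideal: "bideal R B F"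
  unfolding F_def by (rule bideal_ssum[OF subrB idZ M_bideal])

lemma ZF: "Z \<subseteq> F"
  unfolding F_def by (rule ssum_sub1[OF M_bideal]) (use cZ in blast)

lemma pF: "p \<in> F"
proof -
  have "x [^] (0::nat) \<otimes> (p \<otimes> (\<one> \<otimes> y [^] (0::nat))) \<in> Gs" by (rule GsI[OF subr_one[OF subrB']])
  then have "p \<in> M" unfolding M_def using pc by (simp add: asum_gen)
  then show ?thesis unfolding F_def using ssum_sub2[OF idZ M_c] by blast
qed

lemma F_B: "F \<subseteq> B" using bideal_sub[OF F_bideal] .

lemma Gs_fin:
  assumes g: "g = x [^] (a::nat) \<otimes> (p \<otimes> (b \<otimes> y [^] (c::nat)))" "b \<in> B'" and n: "n > a" "n > c"
  shows "y [^] n \<otimes> g = \<zero> \<and> g \<otimes> x [^] n = \<zero>"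
proof -
  have bc: "b \<in> carrier R" using g B'c by blast
  have W: "p \<otimes> (b \<otimes> y [^] c) \<in> carrier R" using bc pc yc by simp
  have "y [^] n \<otimes> g = y [^] (n - a) \<otimes> (p \<otimes> (b \<otimes> y [^] c))"
    unfolding g(1) using yxpow_r[OF W, of n a] n by simp
  also have "\<dots> = \<zero>" using ypowp_r[of "b \<otimes> y [^] c" "n - a"] bc yc n by simp
  finally have "y [^] n \<otimes> g = \<zero>" .
  moreover have "g \<otimes> x [^] n = x [^] a \<otimes> (p \<otimes> (b \<otimes> (y [^] c \<otimes> x [^] n)))"
    using g xc yc pc B'c by (simp add: m_assoc)
  moreover have "\<dots> = \<zero>"
  proof -
    have "y [^] c \<otimes> x [^] n = x [^] (n - c)" using yxpow[of c n] n by simp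
    moreover have "b \<otimes> x [^] (n - c) = x [^] (n - c) \<otimes> b" using cxp[OF g(2)] by simp
    moreover have "p \<otimes> (x [^] (n - c) \<otimes> b) = \<zero>" using pxpow_r[OF bc, of "n - c"] n by simp
    ultimately show ?thesis using xc by simp
  qed
  ultimately show ?thesis by simp
qed

lemma F_fin: "f \<in> F \<Longrightarrow> \<exists>N. \<forall>n::nat\<ge>N. y [^] n \<otimes> f \<in> Z \<and> f \<otimes> x [^] n \<in> Z"
proof -
  have Mfin: "\<exists>N. \<forall>n::nat\<ge>N. y [^] n \<otimes> m = \<zero> \<and> m \<otimes> x [^] n = \<zero>" if m: "m \<in> M" for m
    using m[unfolded M_def]
  proof (induction rule: asum.induct)
    case (asum_gen g)
    then obtain a b c where g: "g = x [^] (a::nat) \<otimes> (p \<otimes> (b \<otimes> y [^] (c::nat)))" "b \<in> B'"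
      unfolding Gs_def by blast
    show ?case
    proof (rule exI[of _ "Suc (max a c)"], intro allI impI)
      fix n assume "n \<ge> Suc (max a c)"
      then show "y [^] n \<otimes> g = \<zero> \<and> g \<otimes> x [^] n = \<zero>" using Gs_fin[OF g] by simp
    qed
  next
    case asum_zero then show ?case using ypc xpc by auto
  next
    case (asum_add m1 m2)
    then obtain N1 N2 where N: "\<forall>n::nat\<ge>N1. y [^] n \<otimes> m1 = \<zero> \<and> m1 \<otimes> x [^] n = \<zero>"
      "\<forall>n::nat\<ge>N2. y [^] n \<otimes> m2 = \<zero> \<and> m2 \<otimes> x [^] n = \<zero>" by blast
    have c: "m1 \<in> carrier R" "m2 \<in> carrier R" using asum_add.hyps asum_carrier[OF Gs_c] by auto
    show ?case by (rule exI[of _ "max N1 N2"]) (use N c ypc xpc in \<open>auto simp: r_distr l_distr\<close>)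
  next
    case (asum_neg m1)
    then obtain N1 where N: "\<forall>n::nat\<ge>N1. y [^] n \<otimes> m1 = \<zero> \<and> m1 \<otimes> x [^] n = \<zero>" by blast
    have c: "m1 \<in> carrier R" using asum_neg.hyps asum_carrier[OF Gs_c] by auto
    show ?case by (rule exI[of _ N1]) (use N c ypc xpc in \<open>auto simp: r_minus l_minus\<close>)
  qed
  assume "f \<in> F"
  then obtain z m where f: "f = z \<oplus> m" "z \<in> Z" "m \<in> M" unfolding F_def by (auto elim!: ssumE)
  obtain N where N: "\<forall>n::nat\<ge>N. y [^] n \<otimes> m = \<zero> \<and> m \<otimes> x [^] n = \<zero>" using Mfin[OF f(3)] by blast
  have c: "z \<in> carrier R" "m \<in> carrier R" using f cZ M_c by auto
  have "y [^] n \<otimes> f \<in> Z \<and> f \<otimes> x [^] n \<in> Z" if n: "n \<ge> N" for n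
  proof -
    have "y [^] n \<otimes> f = y [^] n \<otimes> z" using f c ypc N n by (simp add: r_distr)
    moreover have "f \<otimes> x [^] n = z \<otimes> x [^] n" using f c xpc N n by (simp add: l_distr)
    ultimately show ?thesis using f(2) bideal_lmul[OF idZ _ ypB] bideal_rmul[OF idZ _ xpB] by simp
  qed
  then show ?thesis by blast
qed

abbreviation E where "E N \<equiv> Esum R x y p N"

lemma E_B: "E N \<in> B"
proof (induction N)
  case 0 then show ?case using subr_zero[OF subrB] by simp
next
  case (Suc N)
  have "x [^] N \<otimes> p \<otimes> y [^] N \<in> B" using subr_mul[OF subrB subr_mul[OF subrB xpB pB] ypB] .
  then show ?case using Suc subr_add[OF subrB] by simp
qed
lemma E_c: "E N \<in> carrier R" using E_B cB by blast

lemma xy_p: "x \<otimes> y \<oplus> p = \<one>"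
  unfolding p_def using xc yc by (simp add: minus_eq a_lcomm r_neg)

lemma E_id: "x [^] N \<otimes> y [^] N \<oplus> E N = \<one>"
proof (induction N)
  case 0 then show ?case by simp
next
  case (Suc N)
  have ey: "y [^] Suc N = y \<otimes> y [^] N" using nat_pow_Suc2[OF yc] .
  have "x [^] Suc N \<otimes> y [^] Suc N \<oplus> x [^] N \<otimes> p \<otimes> y [^] N = x [^] N \<otimes> (x \<otimes> y \<oplus> p) \<otimes> y [^] N"
    unfolding ey using xc yc pc by (simp add: l_distr r_distr m_assoc)
  also have "\<dots> = x [^] N \<otimes> y [^] N" using xy_p xc yc by simp
  finally have e: "x [^] Suc N \<otimes> y [^] Suc N \<oplus> x [^] N \<otimes> p \<otimes> y [^] N = x [^] N \<otimes> y [^] N" .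
  have "x [^] Suc N \<otimes> y [^] Suc N \<oplus> E (Suc N) = (x [^] Suc N \<otimes> y [^] Suc N \<oplus> x [^] N \<otimes> p \<otimes> y [^] N) \<oplus> E N"
    using xc yc pc E_c by (simp add: a_ac del: nat_pow_Suc)
  also have "\<dots> = \<one>" using e Suc by simp
  finally show ?case .
qed

lemma decomp:
  assumes f: "f \<in> B" and Zy: "y [^] N \<otimes> f \<in> Z" and Zx: "f \<otimes> x [^] N \<in> Z"
  shows "eqz f (E N \<otimes> f \<otimes> E N)"
proof -
  have fc: "f \<in> carrier R" using f cB by blast
  have "f = (x [^] N \<otimes> y [^] N \<oplus> E N) \<otimes> f" using E_id fc by simp
  also have "\<dots> = E N \<otimes> f \<oplus> x [^] N \<otimes> (y [^] N \<otimes> f)" using fc xc yc E_c by (simp add: l_distr m_assoc a_comm)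
  finally have e1: "f = E N \<otimes> f \<oplus> x [^] N \<otimes> (y [^] N \<otimes> f)" .
  have "x [^] N \<otimes> (y [^] N \<otimes> f) \<in> Z" using bideal_lmul[OF idZ Zy xpB] .
  then have s1: "eqz f (E N \<otimes> f)" using e1 eqz_addZ subr_mul[OF subrB E_B f] by metis
  have "E N \<otimes> f = E N \<otimes> f \<otimes> (x [^] N \<otimes> y [^] N \<oplus> E N)" using E_id fc E_c by simp
  also have "\<dots> = E N \<otimes> f \<otimes> E N \<oplus> E N \<otimes> (f \<otimes> x [^] N) \<otimes> y [^] N"
    using fc xc yc E_c by (simp add: r_distr m_assoc a_comm)
  finally have e2: "E N \<otimes> f = E N \<otimes> f \<otimes> E N \<oplus> E N \<otimes> (f \<otimes> x [^] N) \<otimes> y [^] N" .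
  have "E N \<otimes> (f \<otimes> x [^] N) \<otimes> y [^] N \<in> Z"
    using bideal_rmul[OF idZ bideal_lmul[OF idZ Zx E_B] ypB] .
  then have s2: "eqz (E N \<otimes> f) (E N \<otimes> f \<otimes> E N)"
    using e2 eqz_addZ subr_mul[OF subrB subr_mul[OF subrB E_B f] E_B] by metis
  show ?thesis using eqz_trans[OF s1 s2] .
qed

lemma extractL: "bideal R B I \<Longrightarrow> q \<in> B \<Longrightarrow> (\<And>a. a < N \<Longrightarrow> p \<otimes> y [^] a \<otimes> q \<in> I) \<Longrightarrow> E N \<otimes> q \<in> I"
proof (induction N)
  case 0 then show ?case using cB bideal_zero by simp
next
  case (Suc N)
  have qc: "q \<in> carrier R" using Suc cB by blast
  have "E (Suc N) \<otimes> q = E N \<otimes> q \<oplus> x [^] N \<otimes> (p \<otimes> y [^] N \<otimes> q)"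
    using qc xc yc pc E_c by (simp add: l_distr m_assoc del: nat_pow_Suc)
  moreover have "E N \<otimes> q \<in> I" using Suc by simp
  moreover have "x [^] N \<otimes> (p \<otimes> y [^] N \<otimes> q) \<in> I" using Suc bideal_lmul xpB by simp
  ultimately show ?case using bideal_add[OF Suc.prems(1)] by simp
qed

lemma extractR: "bideal R B I \<Longrightarrow> q \<in> B \<Longrightarrow> (\<And>c. c < N \<Longrightarrow> q \<otimes> x [^] c \<otimes> p \<in> I) \<Longrightarrow> q \<otimes> E N \<in> I"
proof (induction N)
  case 0 then show ?case using cB bideal_zero by simp
next
  case (Suc N)
  have qc: "q \<in> carrier R" using Suc cB by blast
  have "q \<otimes> E (Suc N) = q \<otimes> E N \<oplus> (q \<otimes> x [^] N \<otimes> p) \<otimes> y [^] N"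
    using qc xc yc pc E_c by (simp add: r_distr m_assoc del: nat_pow_Suc)
  moreover have "q \<otimes> E N \<in> I" using Suc by simp
  moreover have "(q \<otimes> x [^] N \<otimes> p) \<otimes> y [^] N \<in> I" using Suc bideal_rmul ypB by simp
  ultimately show ?case using bideal_add[OF Suc.prems(1)] by simp
qed

end

context nctx begin

lemma pyxp: "w \<in> carrier R \<Longrightarrow> p \<otimes> (y [^] (a::nat) \<otimes> (x [^] (a'::nat) \<otimes> (p \<otimes> w))) = (if a = a' then p \<otimes> w else \<zero>)"
proof -
  assume w: "w \<in> carrier R"
  have W: "p \<otimes> w \<in> carrier R" using w pc by simp
  show ?thesis
  proof (cases "a \<le> a'")
    case True
    then have e: "y [^] a \<otimes> (x [^] a' \<otimes> (p \<otimes> w)) = x [^] (a' - a) \<otimes> (p \<otimes> w)"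
      using yxpow_r[OF W, of a a'] by simp
    show ?thesis
    proof (cases "a = a'")
      case True
      then show ?thesis unfolding e using W pp_r[OF w] by simp
    next
      case False
      then show ?thesis unfolding e using pxpow_r[OF W, of "a' - a"] \<open>a \<le> a'\<close> by simp
    qed
  next
    case False
    then have e: "y [^] a \<otimes> (x [^] a' \<otimes> (p \<otimes> w)) = y [^] (a - a') \<otimes> (p \<otimes> w)"
      using yxpow_r[OF W, of a a'] by simp
    have "y [^] (a - a') \<otimes> (p \<otimes> w) = \<zero>" using ypowp_r[OF w, of "a - a'"] False by simp
    then show ?thesis unfolding e using False pc by simp
  qed
qed

definition ex :: "nat \<Rightarrow> nat \<Rightarrow> 'a \<Rightarrow> 'a" where
  "ex a c f = p \<otimes> (y [^] a \<otimes> (f \<otimes> (x [^] c \<otimes> p)))"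

lemma ex_eq: "f \<in> carrier R \<Longrightarrow> ex a c f = p \<otimes> y [^] a \<otimes> f \<otimes> x [^] c \<otimes> p"
  unfolding ex_def using pc xc yc by (simp add: m_assoc)

lemma ex_c: "f \<in> carrier R \<Longrightarrow> ex a c f \<in> carrier R"
  unfolding ex_def using pc xc yc by simp

lemma ex_add: "f \<in> carrier R \<Longrightarrow> g \<in> carrier R \<Longrightarrow> ex a c (f \<oplus> g) = ex a c f \<oplus> ex a c g"
  unfolding ex_def using pc xc yc by (simp add: l_distr r_distr)

lemma ex_neg: "f \<in> carrier R \<Longrightarrow> ex a c (\<ominus> f) = \<ominus> ex a c f"
  unfolding ex_def using pc xc yc by (simp add: l_minus r_minus)

lemma ex_zero: "ex a c \<zero> = \<zero>"
  unfolding ex_def using pc xc yc by simp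

lemma ex_Gs: "g \<in> Gs \<Longrightarrow> \<exists>b0\<in>B'. ex a c g = p \<otimes> b0"
proof -
  assume "g \<in> Gs"
  then obtain a' b c' where g: "g = x [^] (a'::nat) \<otimes> (p \<otimes> (b \<otimes> y [^] (c'::nat)))" "b \<in> B'"
    unfolding Gs_def by blast
  have bc: "b \<in> carrier R" using g B'c by blast
  have w1: "b \<otimes> (y [^] c' \<otimes> (x [^] c \<otimes> p)) \<in> carrier R" using bc xc yc pc by simp
  have e1: "ex a c g = p \<otimes> (y [^] a \<otimes> (x [^] a' \<otimes> (p \<otimes> (b \<otimes> (y [^] c' \<otimes> (x [^] c \<otimes> p))))))"
    unfolding ex_def g(1) using bc xc yc pc by (simp add: m_assoc)
  show ?thesis
  proof (cases "a = a'")
    case False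
    then have "ex a c g = p \<otimes> \<zero>" unfolding e1 pyxp[OF w1] using pc by simp
    then show ?thesis using subr_zero[OF subrB'] by blast
  next
    case True
    then have e2: "ex a c g = p \<otimes> (b \<otimes> (y [^] c' \<otimes> (x [^] c \<otimes> p)))" unfolding e1 pyxp[OF w1] by simp
    have w2: "y [^] c' \<otimes> (x [^] c \<otimes> p) \<in> carrier R" using xc yc pc by simp
    have "p \<otimes> (b \<otimes> (y [^] c' \<otimes> (x [^] c \<otimes> p))) = b \<otimes> (p \<otimes> (y [^] c' \<otimes> (x [^] c \<otimes> p)))"
      using lc_p[OF g(2) w2] by simp
    also have "\<dots> = b \<otimes> (p \<otimes> (p \<otimes> (y [^] c' \<otimes> (x [^] c \<otimes> p))))" using pp_r[OF w2] by simp
    also have "p \<otimes> (y [^] c' \<otimes> (x [^] c \<otimes> p)) = p \<otimes> (y [^] c' \<otimes> (x [^] c \<otimes> (p \<otimes> \<one>)))" using pc by simp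
    also have "\<dots> = (if c' = c then p \<otimes> \<one> else \<zero>)" using pyxp[of \<one> c' c] by simp
    finally have e3: "ex a c g = b \<otimes> (p \<otimes> (if c' = c then p else \<zero>))" unfolding e2 using pc by simp
    show ?thesis
    proof (cases "c' = c")
      case True
      have "ex a c g = b \<otimes> p" unfolding e3 using True pp by simp
      then have "ex a c g = p \<otimes> b" using cp[OF g(2)] by simp
      then show ?thesis using g(2) by blast
    next
      case False
      have "ex a c g = p \<otimes> \<zero>" unfolding e3 using False bc pc by simp
      then show ?thesis using subr_zero[OF subrB'] by blast
    qed
  qed
qed

lemma ex_M: "m \<in> M \<Longrightarrow> \<exists>b0\<in>B'. ex a c m = p \<otimes> b0"
  unfolding M_def
proof (induction rule: asum.induct)
  case (asum_gen g) then show ?case using ex_Gs by blast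
next
  case asum_zero then show ?case using ex_zero subr_zero[OF subrB'] pc by (intro bexI[of _ \<zero>]) auto
next
  case (asum_add m1 m2)
  then obtain b1 b2 where b: "b1 \<in> B'" "ex a c m1 = p \<otimes> b1" "b2 \<in> B'" "ex a c m2 = p \<otimes> b2" by blast
  have c: "m1 \<in> carrier R" "m2 \<in> carrier R" using asum_add.hyps asum_carrier[OF Gs_c] by auto
  have "ex a c (m1 \<oplus> m2) = p \<otimes> (b1 \<oplus> b2)" using ex_add[OF c] b pc B'c by (simp add: r_distr)
  then show ?case using subr_add[OF subrB' b(1) b(3)] by blast
next
  case (asum_neg m1)
  then obtain b1 where b: "b1 \<in> B'" "ex a c m1 = p \<otimes> b1" by blast
  have c: "m1 \<in> carrier R" using asum_neg.hyps asum_carrier[OF Gs_c] by auto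
  have "ex a c (\<ominus> m1) = p \<otimes> (\<ominus> b1)" using ex_neg[OF c] b pc B'c by (simp add: r_minus)
  then show ?case using subr_neg[OF subrB' b(1)] by blast
qed

lemma ex_B: "f \<in> B \<Longrightarrow> ex a c f \<in> B"
  unfolding ex_def by (intro subr_mul[OF subrB] pB ypB xpB)

lemma ex_F: "f \<in> F \<Longrightarrow> \<exists>b0\<in>B'. eqz (ex a c f) (p \<otimes> b0)"
proof -
  assume "f \<in> F"
  then obtain z m where f: "f = z \<oplus> m" "z \<in> Z" "m \<in> M" unfolding F_def by (auto elim!: ssumE)
  obtain b0 where b0: "b0 \<in> B'" "ex a c m = p \<otimes> b0" using ex_M[OF f(3)] by blast
  have c: "z \<in> carrier R" "m \<in> carrier R" using f cZ M_c by auto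
  have e: "ex a c f = p \<otimes> b0 \<oplus> ex a c z" unfolding f(1) ex_add[OF c] b0(2) using c ex_c pc B'c b0 by (simp add: a_comm)
  have "ex a c z \<in> Z" unfolding ex_def
    by (intro bideal_lmul[OF idZ] bideal_rmul[OF idZ] f(2) pB ypB subr_mul[OF subrB] xpB)
  moreover have "p \<otimes> b0 \<in> B" using b0 B'B pB subr_mul[OF subrB] by blast
  ultimately have "eqz (ex a c f) (p \<otimes> b0)" unfolding e by (rule eqz_addZ[rotated])
  then show ?thesis using b0 by blast
qed

definition Jp :: "'a set \<Rightarrow> 'a set" where "Jp I = {b \<in> B'. p \<otimes> b \<in> I}"

lemma Jp_mono: "I \<subseteq> I' \<Longrightarrow> Jp I \<subseteq> Jp I'" unfolding Jp_def by blast

lemma Jp_bideal: "bideal R B I \<Longrightarrow> bideal R B' (Jp I)"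
  unfolding bideal_def
proof (intro conjI ballI)
  assume I: "I \<subseteq> B \<and> \<zero> \<in> I \<and> (\<forall>a\<in>I. \<forall>b\<in>I. a \<oplus> b \<in> I) \<and> (\<forall>a\<in>I. \<ominus> a \<in> I) \<and> (\<forall>a\<in>I. \<forall>b\<in>B. a \<otimes> b \<in> I \<and> b \<otimes> a \<in> I)"
  show "Jp I \<subseteq> B'" unfolding Jp_def by blast
  show "\<zero> \<in> Jp I" unfolding Jp_def using I pc subr_zero[OF subrB'] by simp
  {
    fix a b assume a: "a \<in> Jp I" and b: "b \<in> Jp I"
    have c: "a \<in> carrier R" "b \<in> carrier R" using a b B'c unfolding Jp_def by auto
    have "p \<otimes> (a \<oplus> b) = p \<otimes> a \<oplus> p \<otimes> b" using c pc by (simp add: r_distr)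
    then show "a \<oplus> b \<in> Jp I" using a b I subr_add[OF subrB'] unfolding Jp_def by auto
  }
  {
    fix a assume a: "a \<in> Jp I"
    have c: "a \<in> carrier R" using a B'c unfolding Jp_def by auto
    have "p \<otimes> (\<ominus> a) = \<ominus> (p \<otimes> a)" using c pc by (simp add: r_minus)
    then show "\<ominus> a \<in> Jp I" using a I subr_neg[OF subrB'] unfolding Jp_def by auto
  }
  {
    fix a b assume a: "a \<in> Jp I" and b: "b \<in> B'"
    have c: "a \<in> carrier R" "b \<in> carrier R" using a b B'c unfolding Jp_def by auto
    have bB: "b \<in> B" using b B'B by blast
    have "p \<otimes> (a \<otimes> b) = (p \<otimes> a) \<otimes> b" using c pc by (simp add: m_assoc)
    then show "a \<otimes> b \<in> Jp I" using a I bB subr_mul[OF subrB' _ b] unfolding Jp_def by auto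
    have "p \<otimes> (b \<otimes> a) = b \<otimes> (p \<otimes> a)" using c pc cp[OF b] by (simp add: m_assoc[symmetric])
    then show "b \<otimes> a \<in> Jp I" using a I bB subr_mul[OF subrB' b] unfolding Jp_def by auto
  }
qed

lemma inj:
  assumes I: "bideal R B I" and I': "bideal R B I'" and ZI: "Z \<subseteq> I" and II: "I \<subseteq> I'"
    and I'F: "I' \<subseteq> F" and J: "Jp I' \<subseteq> Jp I"
  shows "I' \<subseteq> I"
proof
  fix f assume f: "f \<in> I'"
  have fF: "f \<in> F" using f I'F by blast
  have fB: "f \<in> B" using fF F_B by blast
  have fc: "f \<in> carrier R" using fB cB by blast
  obtain N where N: "\<forall>n::nat\<ge>N. y [^] n \<otimes> f \<in> Z \<and> f \<otimes> x [^] n \<in> Z" using F_fin[OF fF] by blast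
  have dec: "eqz f (E N \<otimes> f \<otimes> E N)" using decomp[OF fB] N by blast
  have exI': "ex a c f \<in> I" for a c
  proof -
    obtain b0 where b0: "b0 \<in> B'" "eqz (ex a c f) (p \<otimes> b0)" using ex_F[OF fF] by blast
    have "ex a c f \<in> I'" unfolding ex_def
      by (intro bideal_lmul[OF I'] bideal_rmul[OF I'] f pB ypB subr_mul[OF subrB] xpB)
    then have "p \<otimes> b0 \<in> I'" using eqz_ideal[OF eqz_sym[OF b0(2)] I'] ZI II by blast
    then have "b0 \<in> Jp I'" using b0 unfolding Jp_def by blast
    then have "p \<otimes> b0 \<in> I" using J unfolding Jp_def by blast
    then show ?thesis using eqz_ideal[OF b0(2) I ZI] by blast
  qed
  have "E N \<otimes> (f \<otimes> E N) \<in> I"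
  proof (rule extractL[OF I])
    show "f \<otimes> E N \<in> B" by (rule subr_mul[OF subrB fB E_B])
    fix a assume "a < N"
    have "(p \<otimes> y [^] a \<otimes> f) \<otimes> E N \<in> I"
    proof (rule extractR[OF I])
      show "p \<otimes> y [^] a \<otimes> f \<in> B" by (intro subr_mul[OF subrB] pB ypB fB)
      fix c assume "c < N"
      show "p \<otimes> y [^] a \<otimes> f \<otimes> x [^] c \<otimes> p \<in> I" using exI'[of a c] ex_eq[OF fc] by simp
    qed
    then show "p \<otimes> y [^] a \<otimes> (f \<otimes> E N) \<in> I" using pc yc fc E_c by (simp add: m_assoc)
  qed
  then have "E N \<otimes> f \<otimes> E N \<in> I" using fc E_c by (simp add: m_assoc)
  then show "f \<in> I" using eqz_ideal[OF dec I ZI] by blast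
qed

theorem stepN:
  assumes A1: "accz R B' (Jp Z)" and A2: "accz R B F"
  shows "accz R B Z"
proof (rule accI)
  fix I :: "nat \<Rightarrow> 'a set"
  assume Ib: "\<And>m. bideal R B (I m)" and IZ: "\<And>m. Z \<subseteq> I m" and Is: "\<And>m. I m \<subseteq> I (Suc m)"
  have Im: "m \<le> m' \<Longrightarrow> I m \<subseteq> I m'" for m m' using chain_mono[of I, OF Is] by blast
  have Ic: "I m \<subseteq> carrier R" for m using bideal_sub[OF Ib] cB by blast
  obtain N1 where N1: "\<forall>m\<ge>N1. ssum (I m) F = ssum (I N1) F"
  proof -
    have "\<exists>N. \<forall>m\<ge>N. ssum (I m) F = ssum (I N) F"
    proof (rule accD[OF A2])
      fix m show "bideal R B (ssum (I m) F)" by (rule bideal_ssum[OF subrB Ib F_bideal])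
      show "F \<subseteq> ssum (I m) F" by (rule ssum_sub2[OF Ib]) (use F_B cB in blast)
      show "ssum (I m) F \<subseteq> ssum (I (Suc m)) F" by (rule ssum_mono[OF Is])
    qed
    then show ?thesis using that by blast
  qed
  obtain N2 where N2: "\<forall>m\<ge>N2. Jp (I m \<inter> F) = Jp (I N2 \<inter> F)"
  proof -
    have "\<exists>N. \<forall>m\<ge>N. Jp (I m \<inter> F) = Jp (I N \<inter> F)"
    proof (rule accD[OF A1])
      fix m show "bideal R B' (Jp (I m \<inter> F))" by (rule Jp_bideal[OF bideal_inter[OF Ib F_bideal]])
      show "Jp Z \<subseteq> Jp (I m \<inter> F)" by (rule Jp_mono) (use IZ ZF in blast)
      show "Jp (I m \<inter> F) \<subseteq> Jp (I (Suc m) \<inter> F)" by (rule Jp_mono) (use Is in blast)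
    qed
    then show ?thesis using that by blast
  qed
  define M0 where "M0 = max N1 N2"
  have "\<forall>m\<ge>M0. I m = I M0"
  proof (intro allI impI)
    fix m assume m: "m \<ge> M0"
    have mm: "m \<ge> N1" "M0 \<ge> N1" "m \<ge> N2" "M0 \<ge> N2" using m by (auto simp: M0_def)
    have s1: "ssum (I m) F = ssum (I M0) F" using N1[rule_format, OF mm(1)] N1[rule_format, OF mm(2)] by (rule trans[OF _ sym])
    have s2: "Jp (I m \<inter> F) = Jp (I M0 \<inter> F)" using N2[rule_format, OF mm(3)] N2[rule_format, OF mm(4)] by (rule trans[OF _ sym])
    have "I m \<inter> F \<subseteq> I M0 \<inter> F"
    proof (rule inj[OF bideal_inter[OF Ib F_bideal] bideal_inter[OF Ib F_bideal]])
      show "Z \<subseteq> I M0 \<inter> F" using IZ ZF by blast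
      show "I M0 \<inter> F \<subseteq> I m \<inter> F" using Im[OF m] by blast
      show "I m \<inter> F \<subseteq> F" by blast
      show "Jp (I m \<inter> F) \<subseteq> Jp (I M0 \<inter> F)" using s2 by simp
    qed
    then have "I m \<subseteq> I M0"
      using modular[OF subrB Ib Ib F_bideal Im[OF m]] s1 by blast
    then show "I m = I M0" using Im[OF m] by blast
  qed
  then show "\<exists>N. \<forall>m\<ge>N. I m = I N" by blast
qed

end

context ring begin
lemma comm_mul_helper:
  assumes "a \<in> carrier R" "b \<in> carrier R" "y \<in> carrier R"
  shows "y \<otimes> (a \<otimes> b) \<ominus> (a \<otimes> b) \<otimes> y = (y \<otimes> a \<ominus> a \<otimes> y) \<otimes> b \<oplus> a \<otimes> (y \<otimes> b \<ominus> b \<otimes> y)"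
proof -
  have "(y \<otimes> a \<ominus> a \<otimes> y) \<otimes> b = y \<otimes> a \<otimes> b \<ominus> a \<otimes> y \<otimes> b" using assms by (simp add: minus_rmul)
  moreover have "a \<otimes> (y \<otimes> b \<ominus> b \<otimes> y) = a \<otimes> y \<otimes> b \<ominus> a \<otimes> b \<otimes> y" using assms by (simp add: minus_lmul m_assoc)
  ultimately show ?thesis using assms minus_trans[of "y \<otimes> a \<otimes> b" "a \<otimes> y \<otimes> b" "a \<otimes> b \<otimes> y"] by (simp add: m_assoc)
qed
lemma comm_add_helper:
  assumes "a \<in> carrier R" "b \<in> carrier R" "y \<in> carrier R"
  shows "y \<otimes> (a \<oplus> b) \<ominus> (a \<oplus> b) \<otimes> y = (y \<otimes> a \<ominus> a \<otimes> y) \<oplus> (y \<otimes> b \<ominus> b \<otimes> y)"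
  using assms by (simp add: r_distr l_distr minus_addadd)
lemma comm_neg_helper:
  assumes "a \<in> carrier R" "y \<in> carrier R"
  shows "y \<otimes> (\<ominus> a) \<ominus> (\<ominus> a) \<otimes> y = \<ominus> (y \<otimes> a \<ominus> a \<otimes> y)"
  using assms by (simp add: r_minus l_minus minus_negneg)

lemma gcl_commute:
  assumes G: "G \<subseteq> carrier R" and y: "y \<in> carrier R" and c: "\<And>g. g \<in> G \<Longrightarrow> y \<otimes> g = g \<otimes> y"
    and b: "b \<in> gcl R G"
  shows "y \<otimes> b = b \<otimes> y"
  using b
proof (induction rule: gcl.induct)
  case (gcl_gen a) then show ?case using c by blast
next
  case gcl_one then show ?case using y by simp
next
  case (gcl_add a b)
  have "a \<in> carrier R" "b \<in> carrier R" using gcl_add.hyps gcl_carrier[OF G] by auto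
  then show ?case using gcl_add.IH y by (simp add: r_distr l_distr)
next
  case (gcl_mul a b)
  have "a \<in> carrier R" "b \<in> carrier R" using gcl_mul.hyps gcl_carrier[OF G] by auto
  then show ?case using gcl_mul.IH y by (metis m_assoc)
next
  case (gcl_neg a)
  have "a \<in> carrier R" using gcl_neg.hyps gcl_carrier[OF G] by auto
  then show ?case using gcl_neg.IH y by (simp add: r_minus l_minus)
qed

lemma base_acc:
  assumes C: "subr R C" and inv: "\<And>c. c \<in> C \<Longrightarrow> c \<noteq> \<zero> \<Longrightarrow> \<exists>d\<in>C. d \<otimes> c = \<one>"
  shows "accz R C Z"
proof (rule accI)
  fix I :: "nat \<Rightarrow> 'a set"
  assume Ib: "\<And>m. bideal R C (I m)" and IZ: "\<And>m. Z \<subseteq> I m" and Is: "\<And>m. I m \<subseteq> I (Suc m)"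
  have Im: "m \<le> m' \<Longrightarrow> I m \<subseteq> I m'" for m m' using chain_mono[of I, OF Is] by blast
  show "\<exists>N. \<forall>m\<ge>N. I m = I N"
  proof (cases "\<exists>m c. c \<in> I m \<and> c \<noteq> \<zero>")
    case False
    then have "I m = {\<zero>}" for m using bideal_zero[OF Ib] by blast
    then show ?thesis by auto
  next
    case True
    then obtain m0 c where c: "c \<in> I m0" "c \<noteq> \<zero>" by blast
    have cC: "c \<in> C" using c bideal_sub[OF Ib] by blast
    obtain d where d: "d \<in> C" "d \<otimes> c = \<one>" using inv[OF cC c(2)] by blast
    have one: "\<one> \<in> I m0" using bideal_lmul[OF Ib c(1) d(1)] d(2) by simp
    have full: "I m = C" if "m \<ge> m0" for m
    proof
      show "I m \<subseteq> C" using bideal_sub[OF Ib] .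
      show "C \<subseteq> I m"
      proof
        fix b assume b: "b \<in> C"
        have "\<one> \<in> I m" using one Im[OF that] by blast
        then have "b \<otimes> \<one> \<in> I m" using bideal_lmul[OF Ib _ b] by blast
        then show "b \<in> I m" using b subr_carrier[OF C] by simp
      qed
    qed
    show ?thesis using full by (intro exI[of _ m0]) auto
  qed
qed

end

locale sctx = ring +
  fixes C :: "'a set" and Ix :: "nat set" and xs :: "nat \<Rightarrow> 'a" and ys :: "nat \<Rightarrow> 'a"
  assumes subrC: "subr R C"
    and Ccent: "c \<in> C \<Longrightarrow> a \<in> carrier R \<Longrightarrow> c \<otimes> a = a \<otimes> c"
    and Cinv: "c \<in> C \<Longrightarrow> c \<noteq> \<zero> \<Longrightarrow> \<exists>d\<in>C. d \<otimes> c = \<one>"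
    and xsc: "i \<in> Ix \<Longrightarrow> xs i \<in> carrier R"
    and ysc: "i \<in> Ix \<Longrightarrow> ys i \<in> carrier R"
    and yxr: "i \<in> Ix \<Longrightarrow> ys i \<otimes> xs i = \<one>"
    and cxx: "i \<in> Ix \<Longrightarrow> j \<in> Ix \<Longrightarrow> i \<noteq> j \<Longrightarrow> xs i \<otimes> xs j = xs j \<otimes> xs i"
    and cxy: "i \<in> Ix \<Longrightarrow> j \<in> Ix \<Longrightarrow> i \<noteq> j \<Longrightarrow> xs i \<otimes> ys j = ys j \<otimes> xs i"
    and cyy: "i \<in> Ix \<Longrightarrow> j \<in> Ix \<Longrightarrow> i \<noteq> j \<Longrightarrow> ys i \<otimes> ys j = ys j \<otimes> ys i"
begin

definition Gn :: "nat set \<Rightarrow> 'a set" where "Gn T = C \<union> xs ` T \<union> ys ` T"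
definition Cl :: "nat set \<Rightarrow> 'a set" where "Cl T = gcl R (Gn T)"
definition pp :: "nat \<Rightarrow> 'a" where "pp i = \<one> \<ominus> xs i \<otimes> ys i"

lemma Gn_c: "T \<subseteq> Ix \<Longrightarrow> Gn T \<subseteq> carrier R"
  unfolding Gn_def using subr_carrier[OF subrC] xsc ysc by blast

lemma Cl_subr: "T \<subseteq> Ix \<Longrightarrow> subr R (Cl T)"
  unfolding Cl_def by (rule subr_gcl[OF Gn_c])

lemma Cl_mono: "T' \<subseteq> T \<Longrightarrow> T \<subseteq> Ix \<Longrightarrow> Cl T' \<subseteq> Cl T"
proof -
  assume a: "T' \<subseteq> T" "T \<subseteq> Ix"
  have "Gn T' \<subseteq> Gn T" using a(1) unfolding Gn_def by blast
  then show ?thesis unfolding Cl_def by (rule gcl_mono[OF _ Gn_c[OF a(2)]])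
qed

lemma xs_Cl: "i \<in> T \<Longrightarrow> xs i \<in> Cl T" unfolding Cl_def Gn_def by (auto intro: gcl_gen)
lemma ys_Cl: "i \<in> T \<Longrightarrow> ys i \<in> Cl T" unfolding Cl_def Gn_def by (auto intro: gcl_gen)

lemma pp_Cl: "i \<in> T \<Longrightarrow> T \<subseteq> Ix \<Longrightarrow> pp i \<in> Cl T"
  unfolding pp_def
  by (rule subr_minus[OF Cl_subr subr_one[OF Cl_subr] subr_mul[OF Cl_subr xs_Cl ys_Cl]])

lemma Cl_empty: "Cl {} = C"
proof
  show "Cl {} \<subseteq> C" unfolding Cl_def Gn_def by (rule gcl_least[OF subrC]) simp
  show "C \<subseteq> Cl {}" unfolding Cl_def Gn_def using gcl_sub by auto
qed

lemma comm_x: "i \<in> Ix \<Longrightarrow> T \<subseteq> Ix \<Longrightarrow> i \<notin> T \<Longrightarrow> b \<in> Cl T \<Longrightarrow> xs i \<otimes> b = b \<otimes> xs i"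
  unfolding Cl_def
proof (rule gcl_commute[OF Gn_c _ _])
  fix g assume i: "i \<in> Ix" and T: "T \<subseteq> Ix" "i \<notin> T" and g: "g \<in> Gn T"
  then show "xs i \<otimes> g = g \<otimes> xs i"
  proof -
    have ij: "j \<in> Ix" "i \<noteq> j" if "j \<in> T" for j using that T by auto
    from g[unfolded Gn_def] consider "g \<in> C" | j where "j \<in> T" "g = xs j" | j where "j \<in> T" "g = ys j" by blast
    then show ?thesis
    proof cases
      case 1 then show ?thesis using Ccent[OF 1 xsc[OF i]] by simp
    next
      case (2 j) then show ?thesis using cxx[OF i ij[OF 2(1)]] by simp
    next
      case (3 j) then show ?thesis using cxy[OF i ij[OF 3(1)]] by simp
    qed
  qed
qed (auto intro: xsc)

lemma comm_y: "i \<in> Ix \<Longrightarrow> T \<subseteq> Ix \<Longrightarrow> i \<notin> T \<Longrightarrow> b \<in> Cl T \<Longrightarrow> ys i \<otimes> b = b \<otimes> ys i"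
  unfolding Cl_def
proof (rule gcl_commute[OF Gn_c _ _])
  fix g assume i: "i \<in> Ix" and T: "T \<subseteq> Ix" "i \<notin> T" and g: "g \<in> Gn T"
  then show "ys i \<otimes> g = g \<otimes> ys i"
  proof -
    have ij: "j \<in> Ix" "i \<noteq> j" if "j \<in> T" for j using that T by auto
    from g[unfolded Gn_def] consider "g \<in> C" | j where "j \<in> T" "g = xs j" | j where "j \<in> T" "g = ys j" by blast
    then show ?thesis
    proof cases
      case 1 then show ?thesis using Ccent[OF 1 ysc[OF i]] by simp
    next
      case (2 j) then show ?thesis using cxy[OF ij(1)[OF 2(1)] i] ij[OF 2(1)] by simp
    next
      case (3 j) then show ?thesis using cyy[OF i ij[OF 3(1)]] by simp
    qed
  qed
qed (auto intro: ysc)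

end

context sctx begin

lemma Cl_split: "i \<in> T \<Longrightarrow> T \<subseteq> Ix \<Longrightarrow> Cl T = gcl R (Cl (T - {i}) \<union> {xs i, ys i})"
proof -
  assume i: "i \<in> T" and T: "T \<subseteq> Ix"
  have "Gn T = Gn (T - {i}) \<union> {xs i, ys i}" using i unfolding Gn_def by blast
  moreover have "{xs i, ys i} \<subseteq> carrier R" using i T xsc ysc by blast
  ultimately show ?thesis unfolding Cl_def using gcl_idem[OF Gn_c, of "T - {i}" "{xs i, ys i}"] T by auto
qed

theorem main_ind:
  assumes "finite T" "T \<subseteq> Ix" "L \<subseteq> T" "bideal R (Cl T) Z" "\<forall>i\<in>L. pp i \<in> Z"
  shows "accz R (Cl T) Z"
  using assms
proof (induction "card T + card (T - L)" arbitrary: T L Z rule: less_induct)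
  case less
  note fin = less.prems(1) and TI = less.prems(2) and LT = less.prems(3) and Zi = less.prems(4) and Lp = less.prems(5)
  have subrB: "subr R (Cl T)" using Cl_subr[OF TI] .
  show ?case
  proof (cases "T = {}")
    case True
    then show ?thesis using base_acc[OF subrC Cinv] Cl_empty by simp
  next
    case False
    show ?thesis
    proof (cases "T - L = {}")
      case False
      then obtain i where i: "i \<in> T" "i \<notin> L" by blast
      define T' where "T' = T - {i}"
      have iI: "i \<in> Ix" using i TI by blast
      have T'I: "T' \<subseteq> Ix" using TI unfolding T'_def by blast
      have iT': "i \<notin> T'" unfolding T'_def by blast
      have subrB': "subr R (Cl T')" using Cl_subr[OF T'I] .
      interpret N: nctx R "Cl T" Z "Cl T'" "xs i" "ys i"
      proof (unfold_locales)
        show "subr R (Cl T)" by (rule subrB)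
        show "bideal R (Cl T) Z" by (rule Zi)
        show "subr R (Cl T')" by (rule subrB')
        show "Cl T' \<subseteq> Cl T" using Cl_mono[OF _ TI] unfolding T'_def by blast
        show "xs i \<in> Cl T" using xs_Cl[OF i(1)] .
        show "ys i \<in> Cl T" using ys_Cl[OF i(1)] .
        show "Cl T \<subseteq> gcl R (Cl T' \<union> {xs i, ys i})" using Cl_split[OF i(1) TI] unfolding T'_def by simp
        show "ys i \<otimes> xs i = \<one>" using yxr[OF iI] .
        fix b assume "b \<in> Cl T'"
        then show "xs i \<otimes> b = b \<otimes> xs i" "ys i \<otimes> b = b \<otimes> ys i"
          using comm_x[OF iI T'I iT'] comm_y[OF iI T'I iT'] by auto
      qed
      have pe: "N.p = pp i" unfolding N.p_def pp_def ..
      have A1: "accz R (Cl T') (N.Jp Z)"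
      proof (rule less.hyps)
        have "card T' = card T - 1" unfolding T'_def using i fin by simp
        moreover have "T' - L = (T - L) - {i}" unfolding T'_def by blast
        then have "card (T' - L) = card (T - L) - 1" using i fin by simp
        moreover have "card T > 0" "card (T - L) > 0" using i fin by (auto simp: card_gt_0_iff)
        ultimately show "card T' + card (T' - L) < card T + card (T - L)" by linarith
        show "finite T'" using fin unfolding T'_def by simp
        show "T' \<subseteq> Ix" by (rule T'I)
        show "L \<subseteq> T'" using LT i unfolding T'_def by blast
        show "bideal R (Cl T') (N.Jp Z)" by (rule N.Jp_bideal[OF Zi])
        show "\<forall>j\<in>L. pp j \<in> N.Jp Z"
        proof
          fix j assume j: "j \<in> L"
          have "pp j \<in> Cl T'" using pp_Cl[OF _ T'I] j LT i unfolding T'_def by blast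
          moreover have "N.p \<otimes> pp j \<in> Z" using bideal_lmul[OF Zi _ N.pB] Lp j by blast
          ultimately show "pp j \<in> N.Jp Z" unfolding N.Jp_def by blast
        qed
      qed
      have A2: "accz R (Cl T) N.F"
      proof (rule less.hyps)
        have "T - insert i L = (T - L) - {i}" by blast
        then have "card (T - insert i L) = card (T - L) - 1" using i fin by simp
        moreover have "card (T - L) > 0" using i fin by (auto simp: card_gt_0_iff)
        ultimately show "card T + card (T - insert i L) < card T + card (T - L)" by linarith
        show "finite T" by (rule fin)
        show "T \<subseteq> Ix" by (rule TI)
        show "insert i L \<subseteq> T" using LT i by blast
        show "bideal R (Cl T) N.F" by (rule N.F_bideal)
        show "\<forall>j\<in>insert i L. pp j \<in> N.F" using N.pF pe Lp N.ZF by auto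
      qed
      show ?thesis by (rule N.stepN[OF A1 A2])
    next
      case True
      then have TL: "T = L" using LT by blast
      from \<open>T \<noteq> {}\<close> obtain i where i: "i \<in> T" by blast
      define T' where "T' = T - {i}"
      have iI: "i \<in> Ix" using i TI by blast
      have T'I: "T' \<subseteq> Ix" using TI unfolding T'_def by blast
      have iT': "i \<notin> T'" unfolding T'_def by blast
      have subrB': "subr R (Cl T')" using Cl_subr[OF T'I] .
      define B'' where "B'' = gcl R (Cl T' \<union> {xs i})"
      have cB': "Cl T' \<subseteq> carrier R" using subrB' by (auto simp: subr_def)
      have subrB'': "subr R B''" unfolding B''_def using cB' xsc[OF iI] by (intro subr_gcl) auto
      have B''eq: "Cl T = gcl R (B'' \<union> {ys i})"
      proof -
        have "Cl T = gcl R (Cl T' \<union> {xs i, ys i})" using Cl_split[OF i TI] unfolding T'_def by simp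
        also have "\<dots> = gcl R (Cl T' \<union> {xs i} \<union> {ys i})" by (simp add: insert_commute)
        also have "\<dots> = gcl R (B'' \<union> {ys i})" unfolding B''_def
          using gcl_idem[of "Cl T' \<union> {xs i}" "{ys i}"] cB' xsc[OF iI] ysc[OF iI] by auto
        finally show ?thesis .
      qed
      have B''B: "B'' \<subseteq> Cl T" unfolding B''eq using gcl_sub by blast
      have B'B'': "Cl T' \<subseteq> B''" unfolding B''_def using gcl_sub by blast
      have ZB: "Z \<subseteq> Cl T" using bideal_sub[OF Zi] .
      have cB: "Cl T \<subseteq> carrier R" using subrB by (auto simp: subr_def)
      have ppZ: "pp i \<in> Z" using Lp TL i by blast
      have gc: "gcl R (Cl T' \<union> {xs i}) \<subseteq> carrier R" by (rule gcl_carrier) (use cB' xsc[OF iI] in auto)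
      have yc: "ys i \<in> carrier R" using ysc[OF iI] .
      have ycomm: "ys i \<otimes> r \<ominus> r \<otimes> ys i \<in> Z" if r: "r \<in> B''" for r
        using r[unfolded B''_def]
      proof (induction rule: gcl.induct)
        case (gcl_gen a)
        then show ?case
        proof
          assume a: "a \<in> Cl T'"
          then have "ys i \<otimes> a = a \<otimes> ys i" using comm_y[OF iI T'I iT'] by blast
          moreover have "a \<in> carrier R" using a cB' by blast
          ultimately have "ys i \<otimes> a \<ominus> a \<otimes> ys i = \<zero>" using yc minus_self by simp
          then show ?thesis using bideal_zero[OF Zi] by simp
        next
          assume "a \<in> {xs i}"
          then have "ys i \<otimes> a \<ominus> a \<otimes> ys i = pp i" unfolding pp_def using yxr[OF iI] by simp
          then show ?thesis using ppZ by simp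
        qed
      next
        case gcl_one
        have "ys i \<otimes> \<one> \<ominus> \<one> \<otimes> ys i = \<zero>" using yc minus_self by simp
        then show ?case using bideal_zero[OF Zi] by simp
      next
        case (gcl_add a b)
        have c: "a \<in> carrier R" "b \<in> carrier R" using gcl_add.hyps gc by blast+
        show ?case unfolding comm_add_helper[OF c yc] by (rule bideal_add[OF Zi gcl_add.IH])
      next
        case (gcl_mul a b)
        have ab: "a \<in> B''" "b \<in> B''" using gcl_mul.hyps unfolding B''_def by auto
        have c: "a \<in> carrier R" "b \<in> carrier R" using gcl_mul.hyps gc by blast+
        have abB: "a \<in> Cl T" "b \<in> Cl T" using ab B''B by blast+
        show ?case unfolding comm_mul_helper[OF c yc]
          by (rule bideal_add[OF Zi bideal_rmul[OF Zi gcl_mul.IH(1) abB(2)] bideal_lmul[OF Zi gcl_mul.IH(2) abB(1)]])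
      next
        case (gcl_neg a)
        have c: "a \<in> carrier R" using gcl_neg.hyps gc by blast
        show ?case unfolding comm_neg_helper[OF c yc] by (rule bideal_neg[OF Zi gcl_neg.IH])
      qed
      have H1: "hctx R (Cl T) Z B'' (ys i)"
      proof (unfold_locales)
        show "subr R (Cl T)" by (rule subrB)
        show "bideal R (Cl T) Z" by (rule Zi)
        show "subr R B''" by (rule subrB'')
        show "B'' \<subseteq> Cl T" by (rule B''B)
        show "ys i \<in> Cl T" by (rule ys_Cl[OF i])
        show "Cl T = gcl R (B'' \<union> {ys i})" by (rule B''eq)
        fix r assume r: "r \<in> B''"
        show "bctx.eqz R (Cl T) Z (ys i \<otimes> r) (r \<otimes> ys i)"
          unfolding bctx.eqz_def[OF bctx.intro[OF ring_axioms bctx_axioms.intro[OF subrB Zi]]]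
          using ycomm[OF r] r B''B ys_Cl[OF i] subr_mul[OF subrB] by blast
      qed
      have ZB'': "bideal R B'' (Z \<inter> B'')" by (rule bideal_restrict[OF Zi B''B subrB''])
      have H2: "hctx R B'' (Z \<inter> B'') (Cl T') (xs i)"
      proof (unfold_locales)
        show "subr R B''" by (rule subrB'')
        show "bideal R B'' (Z \<inter> B'')" by (rule ZB'')
        show "subr R (Cl T')" by (rule subrB')
        show "Cl T' \<subseteq> B''" by (rule B'B'')
        show "xs i \<in> B''" unfolding B''_def by (rule gcl_gen) simp
        show "B'' = gcl R (Cl T' \<union> {xs i})" by (rule B''_def)
        fix r assume r: "r \<in> Cl T'"
        have e: "xs i \<otimes> r = r \<otimes> xs i" using comm_x[OF iI T'I iT' r] .
        have m: "xs i \<otimes> r \<in> B''" using subr_mul[OF subrB'' _ ] r B'B'' \<open>xs i \<in> B''\<close> by blast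
        have "bctx.eqz R B'' (Z \<inter> B'') (xs i \<otimes> r) (xs i \<otimes> r)"
          by (rule bctx.eqz_refl[OF bctx.intro[OF ring_axioms bctx_axioms.intro[OF subrB'' ZB'']] m])
        then show "bctx.eqz R B'' (Z \<inter> B'') (xs i \<otimes> r) (r \<otimes> xs i)" using e by simp
      qed
      have A0: "accz R (Cl T') (Z \<inter> Cl T')"
      proof (rule less.hyps)
        have "card T' = card T - 1" unfolding T'_def using i fin by simp
        moreover have "card T > 0" using i fin by (auto simp: card_gt_0_iff)
        moreover have "T' - (L - {i}) = {}" using TL unfolding T'_def by blast
        then have "card (T' - (L - {i})) = 0" by (simp only: card.empty)
        moreover have "card (T - L) = 0" using True by (simp only: card.empty)
        ultimately show "card T' + card (T' - (L - {i})) < card T + card (T - L)" by linarith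
        show "finite T'" using fin unfolding T'_def by simp
        show "T' \<subseteq> Ix" by (rule T'I)
        show "L - {i} \<subseteq> T'" using TL unfolding T'_def by blast
        show "bideal R (Cl T') (Z \<inter> Cl T')" by (rule bideal_restrict[OF Zi Cl_mono[OF _ TI] subrB']) (auto simp: T'_def)
        show "\<forall>j\<in>L - {i}. pp j \<in> Z \<inter> Cl T'" using Lp TL pp_Cl[OF _ T'I] unfolding T'_def by blast
      qed
      have "Z \<inter> B'' \<inter> Cl T' = Z \<inter> Cl T'" using B'B'' by blast
      then have "accz R B'' (Z \<inter> B'')" using hctx.hilbert[OF H2] A0 by simp
      then show ?thesis using hctx.hilbert[OF H1] by simp
    qed
  qed
qed

theorem main_acc: "finite Ix \<Longrightarrow> accz R (Cl Ix) {\<zero>}"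
proof (rule main_ind[of Ix "{}"])
  assume "finite Ix"
  then show "finite Ix" .
  show "Ix \<subseteq> Ix" "{} \<subseteq> Ix" "\<forall>i\<in>{}. pp i \<in> {\<zero>}" by auto
  have s: "subr R (Cl Ix)" by (rule Cl_subr) simp
  show "bideal R (Cl Ix) {\<zero>}" unfolding bideal_def using subr_zero[OF s] subr_carrier[OF s] by auto
qed

end

definition conv :: "(gen list \<Rightarrow> 'k::field) \<Rightarrow> (gen list \<Rightarrow> 'k) \<Rightarrow> gen list \<Rightarrow> 'k" where
  "conv f g w = (\<Sum>i\<le>length w. f (take i w) * g (drop i w))"

definition FC :: "nat \<Rightarrow> (gen list \<Rightarrow> 'k::field) set" where
  "FC n = {f. finite {w. f w \<noteq> 0} \<and> (\<forall>w. f w \<noteq> 0 \<longrightarrow> set w \<subseteq> gens n)}"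

lemma FA_simps:
  "carrier (free_alg n) = FC n"
  "mult (free_alg n) = conv"
  "one (free_alg n) = (\<lambda>w. if w = [] then 1 else 0)"
  "zero (free_alg n) = (\<lambda>w. 0)"
  "add (free_alg n) = (\<lambda>f g w. f w + g w)"
  unfolding free_alg_def FC_def conv_def[abs_def] by simp_all

lemma conv_assoc: "conv (conv f g) h = conv f (conv g h)"
proof
  fix w :: "gen list"
  define n where "n = length w"
  define G where "G j k = f (take j w) * g (take k (drop j w)) * h (drop (j + k) w)" for j k
  have "conv (conv f g) h w = (\<Sum>i\<le>n. (\<Sum>j\<le>i. f (take j (take i w)) * g (drop j (take i w))) * h (drop i w))"
    unfolding conv_def n_def by (intro sum.cong refl) (simp add: min_def)
  also have "\<dots> = (\<Sum>i\<le>n. \<Sum>j\<le>i. G j (i - j))"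
    unfolding G_def by (intro sum.cong refl) (auto simp: sum_distrib_right min_def drop_take)
  also have "\<dots> = (\<Sum>(j, k)\<in>{(j, k). j + k \<le> n}. G j k)"
    by (rule sum.triangle_reindex_eq[symmetric])
  also have "{(j, k). j + k \<le> n} = Sigma {..n} (\<lambda>j. {..n - j})" by auto
  also have "(\<Sum>(j, k)\<in>Sigma {..n} (\<lambda>j. {..n - j}). G j k) = (\<Sum>j\<le>n. \<Sum>k\<le>n - j. G j k)"
    by (rule sum.Sigma[symmetric]) auto
  also have "\<dots> = conv f (conv g h) w"
    unfolding conv_def n_def G_def by (intro sum.cong refl) (simp add: sum_distrib_left mult.assoc add.commute)
  finally show "conv (conv f g) h w = conv f (conv g h) w" .
qed

lemma conv_ldistr: "conv (\<lambda>w. f w + g w) h = (\<lambda>w. conv f h w + conv g h w)"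
  unfolding conv_def by (auto simp: ring_distribs sum.distrib)

lemma conv_rdistr: "conv h (\<lambda>w. f w + g w) = (\<lambda>w. conv h f w + conv h g w)"
  unfolding conv_def by (auto simp: ring_distribs sum.distrib)

lemma take_eq_Nil_le: "i \<le> length w \<Longrightarrow> take i w = [] \<longleftrightarrow> i = 0"
  by auto

lemma conv_lone: "conv (\<lambda>w. if w = [] then 1 else 0) f = f"
proof
  fix w :: "gen list"
  have "conv (\<lambda>w. if w = [] then 1 else 0) f w = (\<Sum>i\<le>length w. if i = 0 then f w else 0)"
    unfolding conv_def by (intro sum.cong refl) auto
  also have "\<dots> = f w" by simp
  finally show "conv (\<lambda>w. if w = [] then 1 else 0) f w = f w" .
qed

lemma conv_rone: "conv f (\<lambda>w. if w = [] then 1 else 0) = f"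
proof
  fix w :: "gen list"
  have "conv f (\<lambda>w. if w = [] then 1 else 0) w = (\<Sum>i\<le>length w. if i = length w then f w else 0)"
    unfolding conv_def by (intro sum.cong refl) auto
  also have "\<dots> = f w" by simp
  finally show "conv f (\<lambda>w. if w = [] then 1 else 0) w = f w" .
qed

lemma conv_nz: assumes "conv f g w \<noteq> 0" shows "\<exists>i\<le>length w. f (take i w) \<noteq> 0 \<and> g (drop i w) \<noteq> 0"
proof (rule ccontr)
  assume "\<not> ?thesis"
  then have "\<forall>i\<in>{..length w}. f (take i w) * g (drop i w) = 0" by auto
  then have "conv f g w = 0" unfolding conv_def by (rule sum.neutral)
  then show False using assms by simp
qed

lemma conv_closed: "f \<in> FC n \<Longrightarrow> g \<in> FC n \<Longrightarrow> conv f g \<in> FC n"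
proof -
  assume f: "f \<in> FC n" and g: "g \<in> FC n"
  have "{w. conv f g w \<noteq> 0} \<subseteq> (\<lambda>(u, v). u @ v) ` ({w. f w \<noteq> 0} \<times> {w. g w \<noteq> 0})"
  proof
    fix w assume "w \<in> {w. conv f g w \<noteq> 0}"
    then obtain i where "f (take i w) \<noteq> 0" "g (drop i w) \<noteq> 0" using conv_nz by blast
    then show "w \<in> (\<lambda>(u, v). u @ v) ` ({w. f w \<noteq> 0} \<times> {w. g w \<noteq> 0})"
      by (intro image_eqI[of _ _ "(take i w, drop i w)"]) auto
  qed
  moreover have "finite ((\<lambda>(u, v). u @ v) ` ({w. f w \<noteq> 0} \<times> {w. g w \<noteq> 0}))"
    using f g unfolding FC_def by auto
  ultimately have "finite {w. conv f g w \<noteq> 0}" by (rule finite_subset)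
  moreover have "set w \<subseteq> gens n" if nz: "conv f g w \<noteq> 0" for w
  proof -
    obtain i where i: "f (take i w) \<noteq> 0" "g (drop i w) \<noteq> 0" using conv_nz[OF nz] by blast
    have "set (take i w) \<subseteq> gens n" "set (drop i w) \<subseteq> gens n" using i f g unfolding FC_def by auto
    then show ?thesis by (metis append_take_drop_id set_append Un_subset_iff)
  qed
  ultimately show ?thesis unfolding FC_def by blast
qed

lemma FC_add: "f \<in> FC n \<Longrightarrow> g \<in> FC n \<Longrightarrow> (\<lambda>w. f w + g w) \<in> FC n"
proof -
  assume f: "f \<in> FC n" and g: "g \<in> FC n"
  have "{w. f w + g w \<noteq> 0} \<subseteq> {w. f w \<noteq> 0} \<union> {w. g w \<noteq> 0}" by auto
  then have "finite {w. f w + g w \<noteq> 0}" using f g unfolding FC_def by (auto intro: finite_subset)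
  moreover have "\<forall>w. f w + g w \<noteq> 0 \<longrightarrow> set w \<subseteq> gens n"
  proof (intro allI impI)
    fix w assume "f w + g w \<noteq> 0"
    then have "f w \<noteq> 0 \<or> g w \<noteq> 0" by auto
    then show "set w \<subseteq> gens n" using f g unfolding FC_def by blast
  qed
  ultimately show ?thesis unfolding FC_def by blast
qed

lemma FC_neg: "f \<in> FC n \<Longrightarrow> (\<lambda>w. - f w) \<in> FC n"
  unfolding FC_def by simp

lemma FC_zero: "(\<lambda>w. 0) \<in> FC n" unfolding FC_def by simp

lemma FC_one: "(\<lambda>w. if w = [] then 1 else 0) \<in> FC n" unfolding FC_def by simp

lemma ring_free: "ring (free_alg n :: (gen list \<Rightarrow> 'k::field) ring)"
proof (rule ringI)
  show "abelian_group (free_alg n :: (gen list \<Rightarrow> 'k::field) ring)"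
  proof (rule abelian_groupI, simp_all only: FA_simps)
    fix x y :: "gen list \<Rightarrow> 'k" assume "x \<in> FC n" "y \<in> FC n" then show "(\<lambda>w. x w + y w) \<in> FC n" by (rule FC_add)
  next
    show "(\<lambda>w. 0) \<in> FC n" by (rule FC_zero)
  next
    fix x :: "gen list \<Rightarrow> 'k" assume "x \<in> FC n"
    then show "\<exists>y\<in>FC n. (\<lambda>w. y w + x w) = (\<lambda>w. 0)" by (intro bexI[of _ "\<lambda>w. - x w"] FC_neg) auto
  qed (auto simp: add.assoc add.commute)
  show "monoid (free_alg n :: (gen list \<Rightarrow> 'k::field) ring)"
  proof (rule monoidI, simp_all only: FA_simps)
    fix x y :: "gen list \<Rightarrow> 'k" assume "x \<in> FC n" "y \<in> FC n" then show "conv x y \<in> FC n" by (rule conv_closed)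
  qed (auto simp: FC_one conv_assoc conv_lone conv_rone)
qed (simp_all add: FA_simps conv_ldistr conv_rdistr)

lemma FA_neg: "f \<in> FC n \<Longrightarrow> \<ominus>\<^bsub>(free_alg n :: (gen list \<Rightarrow> 'k::field) ring)\<^esub> f = (\<lambda>w. - f w)"
proof -
  assume f: "f \<in> FC n"
  interpret R: ring "free_alg n :: (gen list \<Rightarrow> 'k::field) ring" by (rule ring_free)
  show ?thesis
    by (rule R.minus_equality) (use f FC_neg in \<open>auto simp: FA_simps\<close>)
qed

lemma FA_minus: "f \<in> FC n \<Longrightarrow> g \<in> FC n \<Longrightarrow> f \<ominus>\<^bsub>(free_alg n :: (gen list \<Rightarrow> 'k::field) ring)\<^esub> g = (\<lambda>w. f w - g w)"
  by (simp add: a_minus_def FA_neg FA_simps)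

lemma mon_FC: "set u \<subseteq> gens n \<Longrightarrow> mon u \<in> FC n"
  unfolding FC_def mon_def by auto

lemma conv_mon: "conv (mon u) (mon v) = (mon (u @ v) :: gen list \<Rightarrow> 'k::field)"
proof
  fix w :: "gen list"
  have e: "(take i w = u \<and> drop i w = v) \<longleftrightarrow> (i = length u \<and> w = u @ v)" if "i \<le> length w" for i
  proof
    assume a: "take i w = u \<and> drop i w = v"
    then have "w = u @ v" by (metis append_take_drop_id)
    moreover have "length u = i" using a that by auto
    ultimately show "i = length u \<and> w = u @ v" by simp
  next
    assume "i = length u \<and> w = u @ v" then show "take i w = u \<and> drop i w = v" by simp
  qed
  have "conv (mon u) (mon v) w = (\<Sum>i\<le>length w. if i = length u \<and> w = u @ v then 1 else 0)"
    unfolding conv_def mon_def using e by (intro sum.cong refl) auto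
  also have "\<dots> = mon (u @ v) w"
  proof (cases "w = u @ v")
    case True
    then show ?thesis unfolding mon_def by simp
  next
    case False
    then show ?thesis unfolding mon_def by simp
  qed
  finally show "conv (mon u) (mon v) w = mon (u @ v) w" .
qed

definition sc :: "'k::field \<Rightarrow> gen list \<Rightarrow> 'k" where "sc c w = (if w = [] then c else 0)"

lemma sc_FC: "sc c \<in> FC n" unfolding FC_def sc_def by simp

lemma conv_sc_l: "conv (sc c) f = (\<lambda>w. c * f w)"
proof
  fix w :: "gen list"
  have "conv (sc c) f w = (\<Sum>i\<le>length w. if i = 0 then c * f w else 0)"
    unfolding conv_def sc_def by (intro sum.cong refl) auto
  then show "conv (sc c) f w = c * f w" by simp
qed

lemma conv_sc_r: "conv f (sc c) = (\<lambda>w. f w * c)"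
proof
  fix w :: "gen list"
  have "conv f (sc c) w = (\<Sum>i\<le>length w. if i = length w then f w * c else 0)"
    unfolding conv_def sc_def by (intro sum.cong refl) auto
  then show "conv f (sc c) w = f w * c" by simp
qed

lemma sc_mul: "conv (sc a) (sc b) = sc (a * b)"
  unfolding conv_sc_l by (auto simp: sc_def)

lemma sc_add: "(\<lambda>w. sc a w + sc b w) = sc (a + b)"
  by (auto simp: sc_def)

lemma sc_neg: "(\<lambda>w. - sc a w) = sc (- a)"
  by (auto simp: sc_def)

lemma sc_one: "sc 1 = (\<lambda>w. if w = [] then 1 else 0)"
  by (auto simp: sc_def)

lemma sc_zero: "sc 0 = (\<lambda>w. 0)"
  by (auto simp: sc_def)

lemma mon_Nil: "mon [] = (\<lambda>w. if w = [] then 1 else 0)"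
  by (auto simp: mon_def)

lemma mon_Cons: "mon (g # u) = conv (mon [g]) (mon u)"
  by (simp add: conv_mon)

definition I0 :: "nat \<Rightarrow> (gen list \<Rightarrow> 'k::field) set" where
  "I0 n = genideal (free_alg n) (rels n)"

definition hq :: "nat \<Rightarrow> (gen list \<Rightarrow> 'k::field) \<Rightarrow> (gen list \<Rightarrow> 'k) set" where
  "hq n = a_r_coset (free_alg n) (I0 n)"

lemma rels_FC: "rels n \<subseteq> (FC n :: (gen list \<Rightarrow> 'k::field) set)"
proof -
  have d: "(\<lambda>w. mon u w - mon v w) \<in> (FC n :: (gen list \<Rightarrow> 'k) set)" if "set u \<subseteq> gens n" "set v \<subseteq> gens n" for u v
  proof -
    have "(\<lambda>w. mon u w + (- mon v w)) \<in> (FC n :: (gen list \<Rightarrow> 'k) set)"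
      by (intro FC_add FC_neg mon_FC that)
    then show ?thesis by simp
  qed
  show ?thesis unfolding rels_def by (auto intro!: d simp: gens_def)
qed

lemma idealI0: "ideal (I0 n :: (gen list \<Rightarrow> 'k::field) set) (free_alg n)"
  unfolding I0_def by (rule ring.genideal_ideal[OF ring_free]) (simp add: FA_simps rels_FC)

lemma relsI0: "rels n \<subseteq> (I0 n :: (gen list \<Rightarrow> 'k::field) set)"
  unfolding I0_def by (rule ring.genideal_self[OF ring_free]) (simp add: FA_simps rels_FC)

lemma S_eq: "S_alg n = free_alg n Quot (I0 n :: (gen list \<Rightarrow> 'k::field) set)"
  unfolding S_alg_def I0_def ..

lemma hom: "ring_hom_ring (free_alg n) (S_alg n) (hq n :: (gen list \<Rightarrow> 'k::field) \<Rightarrow> _)"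
  unfolding S_eq hq_def using ideal.rcos_ring_hom_ring[OF idealI0] .

lemma ring_S: "ring (S_alg n :: (gen list \<Rightarrow> 'k::field) set ring)"
  unfolding S_eq using ideal.quotient_is_ring[OF idealI0] .

lemma carrier_S: "carrier (S_alg n :: (gen list \<Rightarrow> 'k::field) set ring) = hq n ` FC n"
  unfolding S_eq hq_def FactRing_def A_RCOSETS_def' by (auto simp: FA_simps)

lemma hq_eq:
  assumes a: "a \<in> FC n" and b: "b \<in> FC n" and d: "(\<lambda>w. a w - b w) \<in> (I0 n :: (gen list \<Rightarrow> 'k::field) set)"
  shows "hq n a = hq n b"
proof -
  interpret I: ideal "I0 n :: (gen list \<Rightarrow> 'k::field) set" "free_alg n" by (rule idealI0)
  have "a \<ominus>\<^bsub>free_alg n\<^esub> b \<in> I0 n" using FA_minus[OF a b] d by simp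
  then have "a \<in> I0 n +>\<^bsub>free_alg n\<^esub> b"
    using I.a_rcos_module_minus[OF ring_free] a b by (simp add: FA_simps)
  then have "I0 n +>\<^bsub>free_alg n\<^esub> b = I0 n +>\<^bsub>free_alg n\<^esub> a"
    using I.a_repr_independence' b by (simp add: FA_simps)
  then show ?thesis unfolding hq_def by simp
qed

lemma hq_rel: "(\<lambda>w. mon u w - mon v w :: 'k::field) \<in> rels n \<Longrightarrow> set u \<subseteq> gens n \<Longrightarrow> set v \<subseteq> gens n
  \<Longrightarrow> hq n (mon u :: gen list \<Rightarrow> 'k) = hq n (mon v)"
  by (rule hq_eq[OF mon_FC mon_FC]) (use relsI0 in blast)+

lemma ideal_bideal: assumes "ideal I R" shows "bideal R (carrier R) I"
proof -
  interpret ideal I R by (rule assms)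
  show ?thesis unfolding bideal_def using a_subset I_l_closed I_r_closed by auto
qed

definition Cs :: "nat \<Rightarrow> (gen list \<Rightarrow> 'k::field) set set" where "Cs n = hq n ` range sc"
definition xsq :: "nat \<Rightarrow> nat \<Rightarrow> (gen list \<Rightarrow> 'k::field) set" where "xsq n i = hq n (mon [X i])"
definition ysq :: "nat \<Rightarrow> nat \<Rightarrow> (gen list \<Rightarrow> 'k::field) set" where "ysq n i = hq n (mon [Y i])"

lemma XY_gens: "i \<in> {1..n} \<Longrightarrow> set [X i] \<subseteq> gens n" "i \<in> {1..n} \<Longrightarrow> set [Y i] \<subseteq> gens n"
  by (auto simp: gens_def)

lemma sctx_inst: "sctx (S_alg n :: (gen list \<Rightarrow> 'k::field) set ring) (Cs n) {1..n} (xsq n) (ysq n)"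
proof -
  interpret H: ring_hom_ring "free_alg n :: (gen list \<Rightarrow> 'k) ring" "S_alg n" "hq n" by (rule hom)
  have cS: "carrier (S_alg n :: (gen list \<Rightarrow> 'k) set ring) = hq n ` FC n" by (rule carrier_S)
  have hadd: "f \<in> FC n \<Longrightarrow> g \<in> FC n \<Longrightarrow> hq n (\<lambda>w. f w + g w) = hq n f \<oplus>\<^bsub>S_alg n\<^esub> hq n g" for f g :: "gen list \<Rightarrow> 'k"
    using H.hom_add[of f g] by (simp add: FA_simps)
  have hmul: "f \<in> FC n \<Longrightarrow> g \<in> FC n \<Longrightarrow> hq n (conv f g) = hq n f \<otimes>\<^bsub>S_alg n\<^esub> hq n g" for f g :: "gen list \<Rightarrow> 'k"
    using H.hom_mult[of f g] by (simp add: FA_simps)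
  have hneg: "f \<in> FC n \<Longrightarrow> hq n (\<lambda>w. - f w) = \<ominus>\<^bsub>S_alg n\<^esub> hq n f" for f :: "gen list \<Rightarrow> 'k"
    using H.hom_a_inv[of f] FA_neg[of f n] by (simp add: FA_simps)
  have hone: "hq n (sc 1 :: gen list \<Rightarrow> 'k) = \<one>\<^bsub>S_alg n\<^esub>" using H.hom_one by (simp add: FA_simps sc_one)
  have hzero: "hq n (sc 0 :: gen list \<Rightarrow> 'k) = \<zero>\<^bsub>S_alg n\<^esub>" using H.hom_zero by (simp add: FA_simps sc_zero)
  have hmon: "hq n (mon [] :: gen list \<Rightarrow> 'k) = \<one>\<^bsub>S_alg n\<^esub>" using hone by (simp add: sc_one mon_Nil)
  have Cc: "Cs n \<subseteq> carrier (S_alg n :: (gen list \<Rightarrow> 'k) set ring)" unfolding Cs_def cS using sc_FC by blast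
  have xc: "i \<in> {1..n} \<Longrightarrow> xsq n i \<in> carrier (S_alg n :: (gen list \<Rightarrow> 'k) set ring)" for i
    unfolding xsq_def cS using mon_FC[OF XY_gens(1)] by blast
  have yc: "i \<in> {1..n} \<Longrightarrow> ysq n i \<in> carrier (S_alg n :: (gen list \<Rightarrow> 'k) set ring)" for i
    unfolding ysq_def cS using mon_FC[OF XY_gens(2)] by blast
  have mm: "hq n (mon [a] :: gen list \<Rightarrow> 'k) \<otimes>\<^bsub>S_alg n\<^esub> hq n (mon [b]) = hq n (mon [a, b])"
    if "set [a] \<subseteq> gens n" "set [b] \<subseteq> gens n" for a b
    using hmul[OF mon_FC[OF that(1)] mon_FC[OF that(2)]] by (simp add: conv_mon)
  have relI: "hq n (mon u :: gen list \<Rightarrow> 'k) = hq n (mon v)"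
    if "(\<lambda>w. mon u w - mon v w :: 'k) \<in> rels n" "set u \<subseteq> gens n" "set v \<subseteq> gens n" for u v
    by (rule hq_rel[OF that])
  show ?thesis
  proof (intro sctx.intro ring_S sctx_axioms.intro)
    show "subr (S_alg n) (Cs n :: (gen list \<Rightarrow> 'k) set set)" unfolding subr_def
    proof (intro conjI ballI)
      show "(Cs n :: (gen list \<Rightarrow> 'k) set set) \<subseteq> carrier (S_alg n)" by (rule Cc)
      show "\<one>\<^bsub>S_alg n\<^esub> \<in> (Cs n :: (gen list \<Rightarrow> 'k) set set)" unfolding Cs_def using hone by (metis rangeI image_eqI)
    next
      fix a b :: "(gen list \<Rightarrow> 'k) set" assume "a \<in> Cs n" "b \<in> Cs n"
      then obtain c d where a: "a = hq n (sc c)" and b: "b = hq n (sc d)" unfolding Cs_def by blast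
      have "a \<oplus>\<^bsub>S_alg n\<^esub> b = hq n (sc (c + d))" unfolding a b using hadd[OF sc_FC sc_FC] sc_add by metis
      then show "a \<oplus>\<^bsub>S_alg n\<^esub> b \<in> Cs n" unfolding Cs_def by simp
      have "a \<otimes>\<^bsub>S_alg n\<^esub> b = hq n (sc (c * d))" unfolding a b using hmul[OF sc_FC sc_FC] sc_mul by metis
      then show "a \<otimes>\<^bsub>S_alg n\<^esub> b \<in> Cs n" unfolding Cs_def by simp
    next
      fix a :: "(gen list \<Rightarrow> 'k) set" assume "a \<in> Cs n"
      then obtain c where a: "a = hq n (sc c)" unfolding Cs_def by blast
      have "\<ominus>\<^bsub>S_alg n\<^esub> a = hq n (sc (- c))" unfolding a using hneg[OF sc_FC] sc_neg by metis
      then show "\<ominus>\<^bsub>S_alg n\<^esub> a \<in> Cs n" unfolding Cs_def by simp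
    qed
  next
    fix c a :: "(gen list \<Rightarrow> 'k) set" assume c: "c \<in> Cs n" and a: "a \<in> carrier (S_alg n)"
    obtain c' where c': "c = hq n (sc c')" using c unfolding Cs_def by blast
    obtain f where f: "f \<in> FC n" "a = hq n f" using a cS by blast
    have "c \<otimes>\<^bsub>S_alg n\<^esub> a = hq n (conv (sc c') f)" unfolding c' f(2) using hmul[OF sc_FC f(1)] by simp
    also have "conv (sc c') f = conv f (sc c')" by (simp add: conv_sc_l conv_sc_r mult.commute)
    also have "hq n (conv f (sc c')) = a \<otimes>\<^bsub>S_alg n\<^esub> c" unfolding c' f(2) using hmul[OF f(1) sc_FC] by simp
    finally show "c \<otimes>\<^bsub>S_alg n\<^esub> a = a \<otimes>\<^bsub>S_alg n\<^esub> c" .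
  next
    fix c :: "(gen list \<Rightarrow> 'k) set" assume c: "c \<in> Cs n" and nz: "c \<noteq> \<zero>\<^bsub>S_alg n\<^esub>"
    obtain c' where c': "c = hq n (sc c')" using c unfolding Cs_def by blast
    have "c' \<noteq> 0" using nz c' hzero by auto
    have "hq n (sc (inverse c')) \<otimes>\<^bsub>S_alg n\<^esub> c = hq n (sc (inverse c' * c'))"
      unfolding c' using hmul[OF sc_FC sc_FC] sc_mul by metis
    also have "\<dots> = \<one>\<^bsub>S_alg n\<^esub>" using \<open>c' \<noteq> 0\<close> hone by simp
    finally show "\<exists>d\<in>Cs n. d \<otimes>\<^bsub>S_alg n\<^esub> c = \<one>\<^bsub>S_alg n\<^esub>" unfolding Cs_def by blast
  next
    fix i assume "i \<in> {1..n}" then show "(xsq n i :: (gen list \<Rightarrow> 'k) set) \<in> carrier (S_alg n)" by (rule xc)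
  next
    fix i assume "i \<in> {1..n}" then show "(ysq n i :: (gen list \<Rightarrow> 'k) set) \<in> carrier (S_alg n)" by (rule yc)
  next
    fix i assume i: "i \<in> {1..n}"
    have "ysq n i \<otimes>\<^bsub>S_alg n\<^esub> xsq n i = (hq n (mon [Y i, X i]) :: (gen list \<Rightarrow> 'k) set)"
      unfolding xsq_def ysq_def using mm[OF XY_gens(2)[OF i] XY_gens(1)[OF i]] by simp
    also have "\<dots> = hq n (mon [])"
      by (rule relI) (use i in \<open>auto simp: rels_def gens_def\<close>)
    finally show "(ysq n i :: (gen list \<Rightarrow> 'k) set) \<otimes>\<^bsub>S_alg n\<^esub> xsq n i = \<one>\<^bsub>S_alg n\<^esub>" using hmon by simp
  next
    fix i j assume i: "i \<in> {1..n}" and j: "j \<in> {1..n}" and ij: "i \<noteq> j"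
    have "xsq n i \<otimes>\<^bsub>S_alg n\<^esub> xsq n j = (hq n (mon [X i, X j]) :: (gen list \<Rightarrow> 'k) set)"
      unfolding xsq_def using mm[OF XY_gens(1)[OF i] XY_gens(1)[OF j]] by simp
    also have "\<dots> = hq n (mon [X j, X i])"
      by (rule relI) (use i j ij in \<open>auto simp: rels_def gens_def\<close>)
    also have "\<dots> = xsq n j \<otimes>\<^bsub>S_alg n\<^esub> xsq n i"
      unfolding xsq_def using mm[OF XY_gens(1)[OF j] XY_gens(1)[OF i]] by simp
    finally show "(xsq n i :: (gen list \<Rightarrow> 'k) set) \<otimes>\<^bsub>S_alg n\<^esub> xsq n j = xsq n j \<otimes>\<^bsub>S_alg n\<^esub> xsq n i" .
  next
    fix i j assume i: "i \<in> {1..n}" and j: "j \<in> {1..n}" and ij: "i \<noteq> j"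
    have "xsq n i \<otimes>\<^bsub>S_alg n\<^esub> ysq n j = (hq n (mon [X i, Y j]) :: (gen list \<Rightarrow> 'k) set)"
      unfolding xsq_def ysq_def using mm[OF XY_gens(1)[OF i] XY_gens(2)[OF j]] by simp
    also have "\<dots> = hq n (mon [Y j, X i])"
      by (rule relI) (use i j ij in \<open>auto simp: rels_def gens_def\<close>)
    also have "\<dots> = ysq n j \<otimes>\<^bsub>S_alg n\<^esub> xsq n i"
      unfolding xsq_def ysq_def using mm[OF XY_gens(2)[OF j] XY_gens(1)[OF i]] by simp
    finally show "(xsq n i :: (gen list \<Rightarrow> 'k) set) \<otimes>\<^bsub>S_alg n\<^esub> ysq n j = ysq n j \<otimes>\<^bsub>S_alg n\<^esub> xsq n i" .
  next
    fix i j assume i: "i \<in> {1..n}" and j: "j \<in> {1..n}" and ij: "i \<noteq> j"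
    have "ysq n i \<otimes>\<^bsub>S_alg n\<^esub> ysq n j = (hq n (mon [Y i, Y j]) :: (gen list \<Rightarrow> 'k) set)"
      unfolding ysq_def using mm[OF XY_gens(2)[OF i] XY_gens(2)[OF j]] by simp
    also have "\<dots> = hq n (mon [Y j, Y i])"
      by (rule relI) (use i j ij in \<open>auto simp: rels_def gens_def\<close>)
    also have "\<dots> = ysq n j \<otimes>\<^bsub>S_alg n\<^esub> ysq n i"
      unfolding ysq_def using mm[OF XY_gens(2)[OF j] XY_gens(2)[OF i]] by simp
    finally show "(ysq n i :: (gen list \<Rightarrow> 'k) set) \<otimes>\<^bsub>S_alg n\<^esub> ysq n j = ysq n j \<otimes>\<^bsub>S_alg n\<^esub> ysq n i" .
  qed
qed

theorem theorem2p7: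
  fixes n :: nat and I :: "nat \<Rightarrow> (gen list \<Rightarrow> 'k::field) set set"
  assumes "n \<ge> 1"
    and "\<And>m. ideal (I m) (S_alg n :: (gen list \<Rightarrow> 'k) set ring)"
    and "\<And>m. I m \<subseteq> I (Suc m)"
  shows "\<exists>N. \<forall>m\<ge>N. I m = I N"
proof -
  interpret S: sctx "S_alg n :: (gen list \<Rightarrow> 'k) set ring" "Cs n" "{1..n}" "xsq n" "ysq n"
    by (rule sctx_inst)
  interpret H: ring_hom_ring "free_alg n :: (gen list \<Rightarrow> 'k) ring" "S_alg n" "hq n" by (rule hom)
  have cS: "carrier (S_alg n :: (gen list \<Rightarrow> 'k) set ring) = hq n ` FC n" by (rule carrier_S)
  have Ix: "{1..n} \<subseteq> {1..n}" by simp
  have sub: "subr (S_alg n) (S.Cl {1..n})" by (rule S.Cl_subr[OF Ix])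
  have hmul: "f \<in> FC n \<Longrightarrow> g \<in> FC n \<Longrightarrow> hq n (conv f g) = hq n f \<otimes>\<^bsub>S_alg n\<^esub> hq n g" for f g :: "gen list \<Rightarrow> 'k"
    using H.hom_mult[of f g] by (simp add: FA_simps)
  have hadd: "f \<in> FC n \<Longrightarrow> g \<in> FC n \<Longrightarrow> hq n (\<lambda>w. f w + g w) = hq n f \<oplus>\<^bsub>S_alg n\<^esub> hq n g" for f g :: "gen list \<Rightarrow> 'k"
    using H.hom_add[of f g] by (simp add: FA_simps)
  have monCl: "hq n (mon u :: gen list \<Rightarrow> 'k) \<in> S.Cl {1..n}" if "set u \<subseteq> gens n" for u
    using that
  proof (induction u)
    case Nil
    have "hq n (mon [] :: gen list \<Rightarrow> 'k) = \<one>\<^bsub>S_alg n\<^esub>" using H.hom_one by (simp add: FA_simps mon_Nil)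
    then show ?case using S.subr_one[OF sub] by simp
  next
    case (Cons g u)
    have g: "set [g] \<subseteq> gens n" and u: "set u \<subseteq> gens n" using Cons.prems by auto
    have "hq n (mon (g # u) :: gen list \<Rightarrow> 'k) = hq n (mon [g]) \<otimes>\<^bsub>S_alg n\<^esub> hq n (mon u)"
    proof -
      have "mon (g # u) = (conv (mon [g]) (mon u) :: gen list \<Rightarrow> 'k)" by (rule mon_Cons)
      then show ?thesis using hmul[OF mon_FC[OF g] mon_FC[OF u]] by simp
    qed
    moreover have "hq n (mon [g] :: gen list \<Rightarrow> 'k) \<in> S.Cl {1..n}"
    proof -
      from g obtain i where i: "i \<in> {1..n}" "g = X i \<or> g = Y i" unfolding gens_def by auto
      then show ?thesis using S.xs_Cl[OF i(1)] S.ys_Cl[OF i(1)] unfolding xsq_def ysq_def by auto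
    qed
    ultimately show ?case using Cons.IH[OF u] S.subr_mul[OF sub] by simp
  qed
  have fcCl: "hq n f \<in> S.Cl {1..n}" if "f \<in> FC n" for f :: "gen list \<Rightarrow> 'k"
    using that
  proof (induction "card {w. f w \<noteq> 0}" arbitrary: f rule: less_induct)
    case less
    have fin: "finite {w. f w \<noteq> 0}" using less.prems unfolding FC_def by blast
    show ?case
    proof (cases "{w. f w \<noteq> 0} = {}")
      case True
      then have "f = (\<lambda>w. 0)" by auto
      then have "hq n f = \<zero>\<^bsub>S_alg n\<^esub>" using H.hom_zero by (simp add: FA_simps)
      then show ?thesis using S.subr_zero[OF sub] by simp
    next
      case False
      then obtain w0 where w0: "f w0 \<noteq> 0" by blast
      define f' where "f' = f(w0 := 0)"
      have sw0: "set w0 \<subseteq> gens n" using less.prems w0 unfolding FC_def by blast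
      have f'FC: "f' \<in> FC n" using less.prems unfolding FC_def f'_def
        by (auto intro: finite_subset[of _ "{w. f w \<noteq> 0}"])
      have "{w. f' w \<noteq> 0} = {w. f w \<noteq> 0} - {w0}" unfolding f'_def by auto
      moreover have "card ({w. f w \<noteq> 0} - {w0}) < card {w. f w \<noteq> 0}"
        by (rule card_Diff1_less[OF fin]) (use w0 in simp)
      ultimately have "card {w. f' w \<noteq> 0} < card {w. f w \<noteq> 0}" by simp
      then have IH: "hq n f' \<in> S.Cl {1..n}" using less.hyps f'FC by blast
      have fe: "f = (\<lambda>w. conv (sc (f w0)) (mon w0) w + f' w)"
        unfolding conv_sc_l f'_def mon_def by auto
      have "hq n f = hq n (conv (sc (f w0)) (mon w0)) \<oplus>\<^bsub>S_alg n\<^esub> hq n f'"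
        by (subst fe, rule hadd[OF conv_closed[OF sc_FC mon_FC[OF sw0]] f'FC])
      also have "hq n (conv (sc (f w0)) (mon w0)) = hq n (sc (f w0)) \<otimes>\<^bsub>S_alg n\<^esub> hq n (mon w0)"
        by (rule hmul[OF sc_FC mon_FC[OF sw0]])
      finally have e: "hq n f = hq n (sc (f w0)) \<otimes>\<^bsub>S_alg n\<^esub> hq n (mon w0) \<oplus>\<^bsub>S_alg n\<^esub> hq n f'" .
      have "hq n (sc (f w0)) \<in> Cs n" unfolding Cs_def by simp
      then have "hq n (sc (f w0)) \<in> S.Cl {1..n}" unfolding S.Cl_def S.Gn_def by (intro gcl_gen) simp
      then show ?thesis unfolding e using S.subr_add[OF sub] S.subr_mul[OF sub] monCl[OF sw0] IH by simp
    qed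
  qed
  have eq: "carrier (S_alg n :: (gen list \<Rightarrow> 'k) set ring) = S.Cl {1..n}"
  proof
    show "carrier (S_alg n) \<subseteq> S.Cl {1..n}" unfolding cS using fcCl by blast
    show "S.Cl {1..n} \<subseteq> carrier (S_alg n)" using sub by (auto simp: subr_def)
  qed
  have acc: "accz (S_alg n :: (gen list \<Rightarrow> 'k) set ring) (S.Cl {1..n}) {\<zero>\<^bsub>S_alg n\<^esub>}"
    by (rule S.main_acc) simp
  show ?thesis
  proof (rule accD[OF acc])
    fix m
    show "bideal (S_alg n) (S.Cl {1..n}) (I m)" using ideal_bideal[OF assms(2)] eq by simp
    show "{\<zero>\<^bsub>S_alg n\<^esub>} \<subseteq> I m" using ideal_bideal[OF assms(2)] unfolding bideal_def by simp
    show "I m \<subseteq> I (Suc m)" by (rule assms(3))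
  qed
qed

end
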